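(* Let $\lambda>0$, $\beta>0$, $\epsilon>0$ and a positive integer $\gamma$ be fixed with $0<\epsilon<\gamma^2\beta/4$, and for each $r>0$ let $(Y^r,X^r)$ be the continuous-time Markov chain described in the context. For all sufficiently large $r$, the process $(Y^r,X^r)$ (and hence $(\bar Y^r,\bar X^r)=r^{-1}(Y^r,X^r-\lambda r/\beta)$) is stable (positive recurrent) with a unique stationary distribution, and the sequence of stationary distributions of $(\bar Y^r,\bar X^r)$ is tight.
   Context: Model: For scaling parameter $r>0$, the process $(Y^r(t),X^r(t))$, $t\ge0$, is a continuous-time Markov chain on $\mathbb{Z}\times\mathbb{Z}_+$ whose transitions from state $(Y,X)$ are: (i) at rate $\lambda r$: $Y\mapsto Y-1$, $X\mapsto X+\gamma$; (ii) at rate $\beta X$: $Y\mapsto Y+1$, $X\mapsto X-(\gamma\wedge X)$; (iii) at rate $\epsilon|Y|$: if $X\ge1$, $X\mapsto X-\mathrm{sgn}(Y)$ ($Y$ unchanged); if $X=0$, $X\mapsto X+1$ when $Y<0$ and no change when $Y\ge0$. Here $\mathrm{sgn}(z)=1,0,-1$ for $z>0$, $z=0$, $z<0$, and $a\wedge b=\min\{a,b\}$. *)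

theory Defs
  imports "HOL-Probability.Probability"
begin

type_synonym state = "int \<times> nat"

definition arr_target :: "nat \<Rightarrow> state \<Rightarrow> state" where
  "arr_target gam s = (fst s - 1, snd s + gam)"

definition srv_target :: "nat \<Rightarrow> state \<Rightarrow> state" where
  "srv_target gam s = (fst s + 1, snd s - min gam (snd s))"

definition eps_target :: "state \<Rightarrow> state" where
  "eps_target s = (if snd s \<ge> 1 then (fst s, nat (int (snd s) - sgn (fst s)))
                   else if fst s < 0 then (fst s, 1) else s)"

definition rate :: "real \<Rightarrow> real \<Rightarrow> real \<Rightarrow> nat \<Rightarrow> real \<Rightarrow> state \<Rightarrow> state \<Rightarrow> real" where
  "rate lam bet eps gam r s t =
     (if t = s then 0 else
        (if t = arr_target gam s then lam * r else 0)
      + (if t = srv_target gam s then bet * real (snd s) else 0)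
      + (if t = eps_target s then eps * real_of_int \<bar>fst s\<bar> else 0))"

definition targets :: "nat \<Rightarrow> state \<Rightarrow> state set" where
  "targets gam s = {arr_target gam s, srv_target gam s, eps_target s}"

definition qout :: "real \<Rightarrow> real \<Rightarrow> real \<Rightarrow> nat \<Rightarrow> real \<Rightarrow> state \<Rightarrow> real" where
  "qout lam bet eps gam r s = (\<Sum>t\<in>targets gam s. rate lam bet eps gam r s t)"

definition stationary :: "real \<Rightarrow> real \<Rightarrow> real \<Rightarrow> nat \<Rightarrow> real \<Rightarrow> state pmf \<Rightarrow> bool" where
  "stationary lam bet eps gam r \<pi> \<longleftrightarrow>
     (\<forall>s. ((\<lambda>u. pmf \<pi> u * rate lam bet eps gam r u s) has_sum
            (pmf \<pi> s * qout lam bet eps gam r s)) UNIV)"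

definition jump :: "real \<Rightarrow> real \<Rightarrow> real \<Rightarrow> nat \<Rightarrow> real \<Rightarrow> state \<Rightarrow> state \<Rightarrow> ennreal" where
  "jump lam bet eps gam r u t = ennreal (rate lam bet eps gam r u t / qout lam bet eps gam r u)"

text \<open>Taboo probabilities: taboo s n t = P_s(Z_n = t, Z_k \<noteq> s for 1 \<le> k \<le> n),
  Z the jump chain started at s.\<close>
primrec taboo :: "real \<Rightarrow> real \<Rightarrow> real \<Rightarrow> nat \<Rightarrow> real \<Rightarrow> state \<Rightarrow> nat \<Rightarrow> state \<Rightarrow> ennreal" where
  "taboo lam bet eps gam r s 0 t = (if t = s then 1 else 0)"
| "taboo lam bet eps gam r s (Suc n) t =
     (if t = s then 0 else
        (\<Sum>\<^sub>\<infinity>u. taboo lam bet eps gam r s n u * jump lam bet eps gam r u t))"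

definition return_prob :: "real \<Rightarrow> real \<Rightarrow> real \<Rightarrow> nat \<Rightarrow> real \<Rightarrow> state \<Rightarrow> ennreal" where
  "return_prob lam bet eps gam r s =
     (\<Sum>\<^sub>\<infinity>n. \<Sum>\<^sub>\<infinity>u. taboo lam bet eps gam r s n u * jump lam bet eps gam r u s)"

text \<open>Expected (continuous) time until the first return to s: sum of the mean
  holding times 1/q(Z_k) over k < T, T the first return index of the jump chain.\<close>
definition mean_return_time :: "real \<Rightarrow> real \<Rightarrow> real \<Rightarrow> nat \<Rightarrow> real \<Rightarrow> state \<Rightarrow> ennreal" where
  "mean_return_time lam bet eps gam r s =
     (\<Sum>\<^sub>\<infinity>n. \<Sum>\<^sub>\<infinity>u. taboo lam bet eps gam r s n u * ennreal (1 / qout lam bet eps gam r u))"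

definition pos_recurrent :: "real \<Rightarrow> real \<Rightarrow> real \<Rightarrow> nat \<Rightarrow> real \<Rightarrow> state \<Rightarrow> bool" where
  "pos_recurrent lam bet eps gam r s \<longleftrightarrow>
     return_prob lam bet eps gam r s = 1 \<and> mean_return_time lam bet eps gam r s < \<infinity>"

definition scaled :: "real \<Rightarrow> real \<Rightarrow> real \<Rightarrow> state \<Rightarrow> real \<times> real" where
  "scaled lam bet r s = (real_of_int (fst s) / r, (real (snd s) - lam * r / bet) / r)"

end

theory Submission
  imports Defs
begin
definition ssum :: "('a \<Rightarrow> ennreal) \<Rightarrow> ennreal" where
  "ssum f = (\<integral>\<^sup>+x. f x \<partial>count_space UNIV)"

lemma ssum_nat: "ssum (f::nat \<Rightarrow> ennreal) = (\<Sum>i. f i)"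
  unfolding ssum_def by (rule nn_integral_count_space_nat)

lemma infsum_nat_ssum: "infsum (f::nat\<Rightarrow>ennreal) UNIV = ssum f"
proof -
  have "f summable_on UNIV" by (rule nonneg_summable_on_complete) simp
  then have "f sums infsum f UNIV"
    using has_sum_imp_sums has_sum_infsum by blast
  then show ?thesis by (simp add: ssum_nat sums_unique)
qed

lemma infsum_ssum_countable:
  fixes f :: "'a::countable \<Rightarrow> ennreal"
  assumes inf: "infinite (UNIV::'a set)"
  shows "infsum f UNIV = ssum f"
proof -
  let ?g = "from_nat_into (UNIV::'a set)"
  have b: "bij_betw ?g UNIV UNIV"
    using bij_betw_from_nat_into[OF countableI_type inf] .
  have "infsum f UNIV = infsum (\<lambda>n. f (?g n)) UNIV"
    using infsum_reindex_bij_betw[OF b, of f] by simp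
  also have "\<dots> = ssum (\<lambda>n. f (?g n))" by (rule infsum_nat_ssum)
  also have "\<dots> = ssum f"
    unfolding ssum_def by (rule nn_integral_bij_count_space[OF b])
  finally show ?thesis .
qed

lemma infinite_state: "infinite (UNIV :: state set)"
  by (simp add: finite_prod)

lemma infsum_state_ssum: "infsum (f::state\<Rightarrow>ennreal) UNIV = ssum f"
  by (rule infsum_ssum_countable[OF infinite_state])

lemma ssum_add: "ssum (\<lambda>x. f x + g x) = ssum f + ssum g"
  unfolding ssum_def by (rule nn_integral_add) auto

lemma ssum_cmult: "ssum (\<lambda>x. c * f x) = c * ssum f"
  unfolding ssum_def by (rule nn_integral_cmult) auto

lemma ssum_cmult_right: "ssum (\<lambda>x. f x * c) = ssum f * c"
  using ssum_cmult[of c f] by (simp add: mult.commute)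

lemma ssum_mono: "(\<And>x. f x \<le> g x) \<Longrightarrow> ssum f \<le> ssum g"
  unfolding ssum_def by (rule nn_integral_mono) auto

lemma ssum_cong: "(\<And>x. f x = g x) \<Longrightarrow> ssum f = ssum g"
  by (metis ext)

lemma ssum_swap:
  fixes f :: "'a::countable \<Rightarrow> 'b \<Rightarrow> ennreal"
  shows "ssum (\<lambda>y. ssum (\<lambda>x. f x y)) = ssum (\<lambda>x. ssum (\<lambda>y. f x y))"
  unfolding ssum_def
  by (rule nn_integral_count_space_nn_integral) auto

lemma ssum_finite: "finite A \<Longrightarrow> (\<And>x. x \<notin> A \<Longrightarrow> f x = 0) \<Longrightarrow> ssum f = sum f A"
  unfolding ssum_def by (rule nn_integral_count_space') auto

lemma ssum_single: "ssum (\<lambda>x. if x = a then c else 0) = c"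
  by (subst ssum_finite[of "{a}"]) auto

lemma ssum_ge: "f a \<le> ssum f"
proof -
  have "ssum (\<lambda>x. if x = a then f a else 0) \<le> ssum f"
    by (rule ssum_mono) auto
  then show ?thesis by (simp add: ssum_single)
qed

lemma ssum_split: "ssum f = ssum (\<lambda>t. if t = s then 0 else f t) + f s"
proof -
  have "ssum f = ssum (\<lambda>t. (if t = s then 0 else f t) + (if t = s then f s else 0))"
    by (rule ssum_cong) auto
  also have "\<dots> = ssum (\<lambda>t. if t = s then 0 else f t) + f s"
    by (simp add: ssum_add ssum_single)
  finally show ?thesis .
qed

lemma ssum_zero[simp]: "ssum (\<lambda>x. 0) = 0"
  unfolding ssum_def by simp

lemma has_sum_ssum:
  fixes f :: "'a::countable \<Rightarrow> real"
  assumes "(f has_sum x) UNIV" "\<And>u. f u \<ge> 0" "infinite (UNIV::'a set)"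
  shows "ssum (\<lambda>u. ennreal (f u)) = ennreal x"
proof -
  have fs: "f summable_on UNIV" using assms(1) by (auto simp: summable_on_def)
  have x: "x = infsum f UNIV" using assms(1) by (simp add: infsumI)
  have "ennreal (infsum f UNIV) = (SUP F\<in>{F. finite F \<and> F \<subseteq> UNIV}. ennreal (sum f F))"
    by (rule infsum_nonneg_is_SUPREMUM_ennreal[OF fs]) (use assms in auto)
  also have "\<dots> = (SUP F\<in>{F. finite F \<and> F \<subseteq> UNIV}. sum (\<lambda>u. ennreal (f u)) F)"
    by (rule SUP_cong) (auto simp: sum_ennreal assms)
  also have "\<dots> = infsum (\<lambda>u. ennreal (f u)) UNIV"
    by (rule nonneg_infsum_complete[symmetric]) auto
  also have "\<dots> = ssum (\<lambda>u. ennreal (f u))"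
    by (rule infsum_ssum_countable[OF assms(3)])
  finally show ?thesis using x by simp
qed

lemma ssum_has_sum:
  fixes f :: "'a::countable \<Rightarrow> real"
  assumes "ssum (\<lambda>u. ennreal (f u)) = ennreal x" "\<And>u. f u \<ge> 0" "x \<ge> 0" "infinite (UNIV::'a set)"
  shows "(f has_sum x) UNIV"
proof -
  have bd: "sum f F \<le> x" if "finite F" for F
  proof -
    have "ennreal (sum f F) = sum (\<lambda>u. ennreal (f u)) F" by (simp add: sum_ennreal assms)
    also have "\<dots> = sum (\<lambda>u. if u \<in> F then ennreal (f u) else 0) F" by simp
    also have "\<dots> = ssum (\<lambda>u. if u \<in> F then ennreal (f u) else 0)"
      by (rule ssum_finite[symmetric]) (use that in auto)
    also have "\<dots> \<le> ssum (\<lambda>u. ennreal (f u))" by (rule ssum_mono) auto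
    finally show ?thesis using assms(1,3) by simp
  qed
  have fs: "f summable_on UNIV"
    by (rule nonneg_bdd_above_summable_on) (use assms bd in \<open>auto simp: bdd_above_def\<close>)
  have "(f has_sum infsum f UNIV) UNIV" using fs by (simp add: has_sum_infsum)
  moreover have "ennreal (infsum f UNIV) = ennreal x"
    using has_sum_ssum[OF \<open>(f has_sum infsum f UNIV) UNIV\<close> assms(2,4)] assms(1) by simp
  moreover have "infsum f UNIV \<ge> 0" using assms(2) by (simp add: infsum_nonneg)
  ultimately show ?thesis using assms(3) by simp
qed

lemma suminf_head_enn: "(\<Sum>n. f n) = f 0 + (\<Sum>n. f (Suc n) :: ennreal)"
proof -
  have "f sums ((\<Sum>n. f (Suc n)) + f 0)"
    by (rule sums_Suc) (rule summable_sums, simp)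
  then show ?thesis by (simp add: sums_iff add.commute)
qed

lemma ssum_sum: "finite A \<Longrightarrow> ssum (\<lambda>u. \<Sum>n\<in>A. f n u) = (\<Sum>n\<in>A. ssum (f n))"
  unfolding ssum_def by (rule nn_integral_sum) auto

locale chain =
  fixes lam bet eps :: real and gam :: nat and r :: real
  assumes qpos: "\<And>u. qout lam bet eps gam r u > 0"
    and row: "\<And>u. ssum (jump lam bet eps gam r u) = 1"
begin

abbreviation "P \<equiv> jump lam bet eps gam r"
abbreviation "tab \<equiv> taboo lam bet eps gam r"
abbreviation "q \<equiv> qout lam bet eps gam r"
abbreviation "rp \<equiv> return_prob lam bet eps gam r"
abbreviation "mrt \<equiv> mean_return_time lam bet eps gam r"

definition "M s n = ssum (\<lambda>t. tab s n t)"
definition "Rn s n = ssum (\<lambda>u. tab s n u * P u s)"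
definition "nu s t = ssum (\<lambda>n. tab s n t)"

lemma tab_Suc: "tab s (Suc n) t = (if t = s then 0 else ssum (\<lambda>u. tab s n u * P u t))"
  by (simp only: taboo.simps infsum_state_ssum)

declare taboo.simps(2)[simp del]

lemma tab0_fun: "tab s 0 = (\<lambda>t. if t = s then 1 else 0)"
  by (simp add: fun_eq_iff)

lemma P_le1: "P u t \<le> 1"
  using ssum_ge[of "P u" t] row[of u] by simp

lemma mass: "M s (Suc n) + Rn s n = M s n"
proof -
  let ?F = "\<lambda>t. ssum (\<lambda>u. tab s n u * P u t)"
  have "ssum ?F = ssum (\<lambda>u. ssum (\<lambda>t. tab s n u * P u t))"
    by (rule ssum_swap)
  also have "\<dots> = ssum (\<lambda>u. tab s n u * ssum (P u))"
    by (simp add: ssum_cmult)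
  also have "\<dots> = M s n" by (simp add: row M_def)
  finally have 1: "ssum ?F = M s n" .
  have "ssum ?F = ssum (\<lambda>t. if t = s then 0 else ?F t) + ?F s" by (rule ssum_split)
  moreover have "ssum (\<lambda>t. if t = s then 0 else ?F t) = M s (Suc n)"
    unfolding M_def by (rule arg_cong[where f=ssum]) (auto simp: tab_Suc fun_eq_iff)
  ultimately show ?thesis using 1 by (simp add: Rn_def)
qed

lemma M0: "M s 0 = 1"
  unfolding M_def by (simp add: tab0_fun ssum_single)

lemma partial: "(\<Sum>n<N. Rn s n) + M s N = 1"
proof (induction N)
  case 0 then show ?case by (simp add: M0)
next
  case (Suc N)
  have "(\<Sum>n<Suc N. Rn s n) + M s (Suc N) = (\<Sum>n<N. Rn s n) + (M s (Suc N) + Rn s N)"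
    by (simp add: algebra_simps)
  also have "\<dots> = 1" using Suc by (simp add: mass)
  finally show ?case .
qed

lemma rp_eq: "rp s = (\<Sum>n. Rn s n)"
  unfolding return_prob_def Rn_def by (simp add: infsum_nat_ssum ssum_nat infsum_state_ssum)

lemma rp_le1: "rp s \<le> 1"
  unfolding rp_eq
proof (rule suminf_le_const)
  fix N show "(\<Sum>n<N. Rn s n) \<le> 1" using partial[where N=N and s=s]
    by (metis le_iff_add)
qed simp

lemma ssum_nu: "ssum (nu s) = (\<Sum>n. M s n)"
proof -
  have "ssum (nu s) = ssum (\<lambda>t. ssum (\<lambda>n. tab s n t))" by (simp add: nu_def[abs_def])
  also have "\<dots> = ssum (\<lambda>n. ssum (\<lambda>t. tab s n t))" by (rule ssum_swap)
  also have "\<dots> = (\<Sum>n. M s n)" by (simp add: ssum_nat M_def)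
  finally show ?thesis .
qed

lemma rp_one:
  assumes fin: "ssum (nu s) < \<infinity>"
  shows "rp s = 1"
proof -
  obtain S where S: "(\<Sum>n. M s n) = ennreal S" "S \<ge> 0"
    using fin ssum_nu by (metis ennreal_cases less_irrefl infinity_ennreal_def)
  have small: "\<exists>N. M s N \<le> ennreal e" if e: "e > 0" for e
  proof (rule ccontr)
    assume "\<not> ?thesis"
    then have gt: "\<And>N. ennreal e < M s N" by (simp add: not_le)
    obtain N :: nat where N: "S < real N * e"
      using reals_Archimedean3[OF e] by blast
    have "ennreal (real N * e) = (\<Sum>n<N. ennreal e)"
      using e by (simp add: ennreal_of_nat_eq_real_of_nat ennreal_mult)
    also have "\<dots> \<le> (\<Sum>n<N. M s n)" by (rule sum_mono) (use gt in \<open>auto intro: less_imp_le\<close>)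
    also have "\<dots> \<le> (\<Sum>n. M s n)" by (rule sum_le_suminf) auto
    finally have "real N * e \<le> S" using S e by (simp add: ennreal_le_iff)
    then show False using N by simp
  qed
  have "1 \<le> rp s"
  proof (rule ennreal_le_epsilon)
    fix e :: real assume "0 < e"
    then obtain N where N: "M s N \<le> ennreal e" using small by blast
    have "1 = (\<Sum>n<N. Rn s n) + M s N" using partial[where N=N and s=s] by simp
    also have "\<dots> \<le> rp s + ennreal e"
      unfolding rp_eq by (rule add_mono[OF sum_le_suminf N]) auto
    finally show "1 \<le> rp s + ennreal e" .
  qed
  then show ?thesis using rp_le1[of s] by simp
qed

lemma nu_self: "nu s s = 1"
  unfolding nu_def ssum_nat by (subst suminf_head_enn) (simp add: tab_Suc)

lemma nu_inv: "ssum (\<lambda>u. nu s u * P u t) = (if t = s then rp s else nu s t)"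
proof -
  have "ssum (\<lambda>u. nu s u * P u t) = ssum (\<lambda>u. ssum (\<lambda>n. tab s n u * P u t))"
    by (simp add: nu_def ssum_cmult_right)
  also have "\<dots> = ssum (\<lambda>n. ssum (\<lambda>u. tab s n u * P u t))"
    by (rule ssum_swap[symmetric])
  finally have eq: "ssum (\<lambda>u. nu s u * P u t) = ssum (\<lambda>n. ssum (\<lambda>u. tab s n u * P u t))" .
  show ?thesis
  proof (cases "t = s")
    case True then show ?thesis using eq by (simp add: rp_eq Rn_def ssum_nat)
  next
    case False
    have "nu s t = (\<Sum>n. tab s (Suc n) t)"
      unfolding nu_def ssum_nat using False by (subst suminf_head_enn) simp
    also have "\<dots> = ssum (\<lambda>n. ssum (\<lambda>u. tab s n u * P u t))"
      using False by (simp add: tab_Suc ssum_nat)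
    finally show ?thesis using eq False by simp
  qed
qed

lemma nu_ge: "nu s u * P u t \<le> (if t = s then rp s else nu s t)"
  using ssum_ge[of "\<lambda>u. nu s u * P u t" u] nu_inv[of s t] by simp

lemma mrt_eq: "mrt s = ssum (\<lambda>u. nu s u * ennreal (1 / q u))"
proof -
  have "mrt s = ssum (\<lambda>n. ssum (\<lambda>u. tab s n u * ennreal (1 / q u)))"
    unfolding mean_return_time_def by (simp add: infsum_nat_ssum infsum_state_ssum)
  also have "\<dots> = ssum (\<lambda>u. ssum (\<lambda>n. tab s n u * ennreal (1 / q u)))"
    by (rule ssum_swap)
  also have "\<dots> = ssum (\<lambda>u. nu s u * ennreal (1 / q u))"
    by (simp add: nu_def ssum_cmult_right)
  finally show ?thesis .
qed

lemma comparison: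
  fixes V g h :: "state \<Rightarrow> ennreal"
  assumes drift: "\<And>u. ssum (\<lambda>t. P u t * V t) + g u \<le> V u + h u"
  shows "ssum (\<lambda>u. nu s u * g u) \<le> V s + ssum (\<lambda>u. nu s u * h u)"
proof -
  define A where "A N = ssum (\<lambda>t. tab s N t * V t)" for N
  define G where "G n = ssum (\<lambda>t. tab s n t * g t)" for n
  define H where "H n = ssum (\<lambda>t. tab s n t * h t)" for n
  have step: "A (Suc N) + G N \<le> A N + H N" for N
  proof -
    have "A (Suc N) \<le> ssum (\<lambda>t. ssum (\<lambda>u. tab s N u * P u t) * V t)"
      unfolding A_def by (rule ssum_mono) (auto simp: tab_Suc)
    also have "\<dots> = ssum (\<lambda>t. ssum (\<lambda>u. tab s N u * (P u t * V t)))"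
      by (simp add: ssum_cmult_right mult.assoc[symmetric])
    also have "\<dots> = ssum (\<lambda>u. ssum (\<lambda>t. tab s N u * (P u t * V t)))"
      by (rule ssum_swap)
    also have "\<dots> = ssum (\<lambda>u. tab s N u * ssum (\<lambda>t. P u t * V t))"
      by (simp add: ssum_cmult)
    finally have "A (Suc N) + G N \<le> ssum (\<lambda>u. tab s N u * ssum (\<lambda>t. P u t * V t)) + G N"
      by (rule add_right_mono)
    also have "\<dots> = ssum (\<lambda>u. tab s N u * (ssum (\<lambda>t. P u t * V t) + g u))"
      by (simp add: G_def ssum_add distrib_left)
    also have "\<dots> \<le> ssum (\<lambda>u. tab s N u * (V u + h u))"
      by (rule ssum_mono) (rule mult_left_mono[OF drift], simp)
    also have "\<dots> = A N + H N"
      by (simp add: A_def H_def ssum_add distrib_left)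
    finally show ?thesis .
  qed
  have ind: "A N + (\<Sum>n<N. G n) \<le> V s + (\<Sum>n<N. H n)" for N
  proof (induction N)
    case 0
    have "A 0 = ssum (\<lambda>t. if t = s then V s else 0)"
      unfolding A_def by (rule ssum_cong) (simp add: tab0_fun)
    then show ?case by (simp add: ssum_single)
  next
    case (Suc N)
    have "A (Suc N) + (\<Sum>n<Suc N. G n) = (A (Suc N) + G N) + (\<Sum>n<N. G n)"
      by (simp add: algebra_simps)
    also have "\<dots> \<le> (A N + H N) + (\<Sum>n<N. G n)" by (rule add_right_mono[OF step])
    also have "\<dots> = (A N + (\<Sum>n<N. G n)) + H N" by (simp add: algebra_simps)
    also have "\<dots> \<le> (V s + (\<Sum>n<N. H n)) + H N" by (rule add_right_mono[OF Suc])
    also have "\<dots> = V s + (\<Sum>n<Suc N. H n)" by (simp add: algebra_simps)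
    finally show ?case .
  qed
  have "(\<Sum>n. G n) \<le> V s + (\<Sum>n. H n)"
  proof (rule suminf_le_const)
    fix N
    have "(\<Sum>n<N. G n) \<le> A N + (\<Sum>n<N. G n)" by simp
    also have "\<dots> \<le> V s + (\<Sum>n<N. H n)" by (rule ind)
    also have "\<dots> \<le> V s + (\<Sum>n. H n)" by (rule add_left_mono, rule sum_le_suminf) auto
    finally show "(\<Sum>n<N. G n) \<le> V s + (\<Sum>n. H n)" .
  qed simp
  moreover have "(\<Sum>n. G n) = ssum (\<lambda>u. nu s u * g u)"
    unfolding G_def ssum_nat[symmetric] nu_def
    by (subst ssum_swap) (simp add: ssum_cmult_right)
  moreover have "(\<Sum>n. H n) = ssum (\<lambda>u. nu s u * h u)"
    unfolding H_def ssum_nat[symmetric] nu_def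
    by (subst ssum_swap) (simp add: ssum_cmult_right)
  ultimately show ?thesis by simp
qed

lemma minimal:
  fixes \<mu> :: "state \<Rightarrow> ennreal"
  assumes inv: "\<And>t. ssum (\<lambda>u. \<mu> u * P u t) \<le> \<mu> t"
  shows "\<mu> s * nu s t \<le> \<mu> t"
proof -
  have ind: "\<mu> s * (\<Sum>n<N. tab s n t) \<le> \<mu> t" for N t
  proof (induction N arbitrary: t)
    case 0 then show ?case by simp
  next
    case (Suc N)
    show ?case
    proof (cases "t = s")
      case True
      have "(\<Sum>n<Suc N. tab s n t) = 1"
        using True by (subst sum.lessThan_Suc_shift) (simp add: tab_Suc)
      then show ?thesis using True by simp
    next
      case False
      have "(\<Sum>n<Suc N. tab s n t) = (\<Sum>n<N. ssum (\<lambda>u. tab s n u * P u t))"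
        using False by (subst sum.lessThan_Suc_shift) (simp add: tab_Suc)
      also have "\<dots> = ssum (\<lambda>u. (\<Sum>n<N. tab s n u) * P u t)"
        by (simp add: ssum_sum sum_distrib_right)
      finally have "\<mu> s * (\<Sum>n<Suc N. tab s n t) = ssum (\<lambda>u. (\<mu> s * (\<Sum>n<N. tab s n u)) * P u t)"
        by (simp add: ssum_cmult mult.assoc)
      also have "\<dots> \<le> ssum (\<lambda>u. \<mu> u * P u t)"
        by (rule ssum_mono) (rule mult_right_mono[OF Suc.IH], simp)
      also have "\<dots> \<le> \<mu> t" by (rule inv)
      finally show ?thesis .
    qed
  qed
  have "\<mu> s * nu s t = \<mu> s * (SUP N. \<Sum>n<N. tab s n t)"
    by (simp add: nu_def ssum_nat suminf_eq_SUP)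
  also have "\<dots> = (SUP N. \<mu> s * (\<Sum>n<N. tab s n t))" by (rule SUP_mult_left_ennreal)
  also have "\<dots> \<le> \<mu> t" by (rule SUP_least) (rule ind)
  finally show ?thesis .
qed

abbreviation "E \<equiv> (\<lambda>u w. 0 < P u w)"

lemma path_fin:
  assumes "E\<^sup>*\<^sup>* u s"
  shows "nu s u < \<infinity>"
  using assms
proof (induction rule: converse_rtranclp_induct)
  case base then show ?case by (simp add: nu_self)
next
  case (step u w)
  have "nu s u * P u w < \<infinity>"
  proof (cases "w = s")
    case True
    then have "nu s u * P u w \<le> 1" using nu_ge[of s u w] rp_le1[of s] by simp
    then show ?thesis by (simp add: le_less_trans)
  next
    case False
    then have "nu s u * P u w \<le> nu s w" using nu_ge[of s u w] by simp
    then show ?thesis using step.IH by (simp add: le_less_trans)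
  qed
  then show ?case using step.hyps(1) by (auto simp: ennreal_mult_less_top)
qed

lemma path_zero:
  fixes \<delta> :: "state \<Rightarrow> ennreal"
  assumes le: "\<And>u w. \<delta> u * P u w \<le> \<delta> w" and z: "\<delta> s = 0" and p: "E\<^sup>*\<^sup>* u s"
  shows "\<delta> u = 0"
  using p
proof (induction rule: converse_rtranclp_induct)
  case base then show ?case using z .
next
  case (step u w)
  then have "\<delta> u * P u w = 0" using le[of u w] by simp
  then show ?case using step.hyps(1) by (metis mult_eq_0_iff order_less_irrefl)
qed

lemma posrec_from_inv:
  fixes \<mu> :: "state \<Rightarrow> ennreal"
  assumes inv: "\<And>t. ssum (\<lambda>u. \<mu> u * P u t) \<le> \<mu> t"
    and pos: "0 < \<mu> s" and fin1: "ssum \<mu> < \<infinity>"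
    and fin2: "ssum (\<lambda>u. \<mu> u * ennreal (1 / q u)) < \<infinity>"
  shows "pos_recurrent lam bet eps gam r s"
proof -
  have mn: "\<mu> s * nu s t \<le> \<mu> t" for t by (rule minimal[OF inv])
  have "\<mu> s * ssum (nu s) = ssum (\<lambda>t. \<mu> s * nu s t)" by (simp add: ssum_cmult)
  also have "\<dots> \<le> ssum \<mu>" by (rule ssum_mono[OF mn])
  finally have "\<mu> s * ssum (nu s) < \<infinity>" using fin1 by (simp add: le_less_trans)
  then have "ssum (nu s) < \<infinity>" using pos by (auto simp: ennreal_mult_less_top)
  then have r1: "rp s = 1" by (rule rp_one)
  have "\<mu> s * mrt s = ssum (\<lambda>u. (\<mu> s * nu s u) * ennreal (1 / q u))"
    by (simp add: mrt_eq ssum_cmult mult.assoc)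
  also have "\<dots> \<le> ssum (\<lambda>u. \<mu> u * ennreal (1 / q u))"
    by (rule ssum_mono) (rule mult_right_mono[OF mn], simp)
  finally have "\<mu> s * mrt s < \<infinity>" using fin2 by (simp add: le_less_trans)
  then have "mrt s < \<infinity>" using pos by (auto simp: ennreal_mult_less_top)
  then show ?thesis using r1 by (simp add: pos_recurrent_def)
qed

lemma unique_inv:
  fixes \<mu> :: "state \<Rightarrow> ennreal"
  assumes inv: "\<And>t. ssum (\<lambda>u. \<mu> u * P u t) = \<mu> t"
    and fin: "\<And>t. \<mu> t < \<infinity>"
    and r1: "rp s = 1"
    and reach: "\<And>u. E\<^sup>*\<^sup>* u s"
  shows "\<mu> t = \<mu> s * nu s t"
proof -
  have mn: "\<mu> s * nu s t \<le> \<mu> t" for t by (rule minimal) (simp add: inv)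
  have nuinv: "ssum (\<lambda>u. nu s u * P u w) = nu s w" for w
    using nu_inv[of s w] r1 nu_self[of s] by simp
  define \<delta> where "\<delta> t = \<mu> t - \<mu> s * nu s t" for t
  have le: "\<delta> u * P u w \<le> \<delta> w" for u w
  proof -
    have "ssum (\<lambda>u. \<delta> u * P u w) + \<mu> s * nu s w
        = ssum (\<lambda>u. \<delta> u * P u w) + ssum (\<lambda>u. (\<mu> s * nu s u) * P u w)"
      by (simp add: nuinv ssum_cmult mult.assoc)
    also have "\<dots> = ssum (\<lambda>u. (\<delta> u + \<mu> s * nu s u) * P u w)"
      by (simp add: ssum_add distrib_right)
    also have "\<dots> = ssum (\<lambda>u. \<mu> u * P u w)"
      by (simp add: \<delta>_def diff_add_cancel_ennreal[OF mn])
    also have "\<dots> = \<mu> w" by (rule inv)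
    finally have eq: "ssum (\<lambda>u. \<delta> u * P u w) + \<mu> s * nu s w = \<mu> w" .
    have "\<mu> s * nu s w \<noteq> \<infinity>" using mn[of w] fin[of w] by (auto simp: top_unique)
    then have "ssum (\<lambda>u. \<delta> u * P u w) = \<delta> w"
      using eq unfolding \<delta>_def by (metis ennreal_add_diff_cancel)
    then show ?thesis using ssum_ge[of "\<lambda>u. \<delta> u * P u w" u] by simp
  qed
  have "\<delta> s = 0" using fin[of s] by (simp add: \<delta>_def nu_self)
  then have "\<delta> t = 0" by (rule path_zero[OF le _ reach])
  then have "\<mu> t \<le> \<mu> s * nu s t" unfolding \<delta>_def by (rule ennreal_minus_eq_0)
  then show ?thesis using mn[of t] by simp
qed

end

locale params =
  fixes lam bet eps :: real and gam :: nat and r :: real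
  assumes lam: "lam > 0" and bet: "bet > 0" and eps: "eps > 0" and gam: "gam > 0" and rpos: "r > 0"
begin

abbreviation "rt \<equiv> rate lam bet eps gam r"
abbreviation "qq \<equiv> qout lam bet eps gam r"
abbreviation "PP \<equiv> jump lam bet eps gam r"

lemma rate_nonneg: "rt u t \<ge> 0"
  using lam eps bet rpos by (simp add: rate_def)

lemma arr_ne: "arr_target gam u \<noteq> u"
  by (cases u) (simp add: arr_target_def)

lemma srv_ne: "srv_target gam u \<noteq> u"
  by (cases u) (simp add: srv_target_def)

lemma finite_targets: "finite (targets gam u)"
  by (simp add: targets_def)

lemma rate_sum:
  fixes \<phi> :: "state \<Rightarrow> real"
  assumes "\<phi> u = 0"
  shows "(\<Sum>t\<in>targets gam u. rt u t * \<phi> t)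
       = lam * r * \<phi> (arr_target gam u) + bet * real (snd u) * \<phi> (srv_target gam u)
         + eps * real_of_int \<bar>fst u\<bar> * \<phi> (eps_target u)"
proof -
  let ?a = "arr_target gam u" and ?b = "srv_target gam u" and ?c = "eps_target u"
  have eq: "rt u t * \<phi> t = (if t = ?a then lam * r * \<phi> t else 0) + (if t = ?b then bet * real (snd u) * \<phi> t else 0)
            + (if t = ?c then eps * real_of_int \<bar>fst u\<bar> * \<phi> t else 0)" for t
    using assms by (cases "t = u") (auto simp: rate_def algebra_simps)
  show ?thesis
    unfolding eq sum.distrib using finite_targets[of u]
    by (simp add: sum.delta' targets_def)
qed

lemma q_eq: "qq u = lam * r + bet * real (snd u) + (if eps_target u = u then 0 else eps * real_of_int \<bar>fst u\<bar>)"
proof -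
  have "qq u = (\<Sum>t\<in>targets gam u. rt u t * (if t = u then 0 else 1))"
    unfolding qout_def by (rule sum.cong) (auto simp: rate_def)
  also have "\<dots> = lam * r + bet * real (snd u) + (if eps_target u = u then 0 else eps * real_of_int \<bar>fst u\<bar>)"
    by (subst rate_sum) (auto simp: arr_ne srv_ne)
  finally show ?thesis .
qed

lemma q_ge: "qq u \<ge> lam * r"
  using eps bet by (simp add: q_eq)

lemma q_pos: "qq u > 0"
  using q_ge[of u] lam rpos by (smt (verit) mult_pos_pos)

lemma q_le: "qq u \<le> lam * r + bet * real (snd u) + eps * real_of_int \<bar>fst u\<bar>"
  using eps by (simp add: q_eq)

lemma rate_zero: "t \<notin> targets gam u \<Longrightarrow> rt u t = 0"
  by (auto simp: rate_def targets_def)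

lemma row: "ssum (PP u) = 1"
proof -
  have "ssum (PP u) = (\<Sum>t\<in>targets gam u. PP u t)"
    by (rule ssum_finite) (auto simp: jump_def rate_zero finite_targets)
  also have "\<dots> = ennreal (\<Sum>t\<in>targets gam u. rt u t / qq u)"
    unfolding jump_def using q_pos[of u] rate_nonneg
    by (subst sum_ennreal) auto
  also have "(\<Sum>t\<in>targets gam u. rt u t / qq u) = (\<Sum>t\<in>targets gam u. rt u t) / qq u"
    by (simp add: sum_divide_distrib)
  also have "\<dots> = 1" using q_pos[of u] by (simp add: qout_def)
  finally show ?thesis by simp
qed

sublocale chain lam bet eps gam r
  by unfold_locales (auto simp: q_pos row)

lemma P_pos: "rt u w > 0 \<Longrightarrow> 0 < PP u w"
  using q_pos[of u] by (simp add: jump_def)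

definition QV :: "(state \<Rightarrow> real) \<Rightarrow> state \<Rightarrow> real" where
  "QV V u = lam * r * (V (arr_target gam u) - V u) + bet * real (snd u) * (V (srv_target gam u) - V u)
           + eps * real_of_int \<bar>fst u\<bar> * (V (eps_target u) - V u)"

lemma PV_eq:
  fixes V :: "state \<Rightarrow> real"
  assumes nn: "\<And>t. V t \<ge> 0"
  shows "ssum (\<lambda>t. PP u t * ennreal (V t)) = ennreal (V u + QV V u / qq u)"
proof -
  have "ssum (\<lambda>t. PP u t * ennreal (V t)) = (\<Sum>t\<in>targets gam u. PP u t * ennreal (V t))"
    by (rule ssum_finite) (auto simp: jump_def rate_zero finite_targets)
  also have "\<dots> = (\<Sum>t\<in>targets gam u. ennreal (rt u t / qq u * V t))"
    unfolding jump_def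
  proof (intro sum.cong refl)
    fix t
    have "rt u t / qq u \<ge> 0" using q_pos[of u] rate_nonneg[of u t] by simp
    then show "ennreal (rt u t / qq u) * ennreal (V t) = ennreal (rt u t / qq u * V t)"
      using nn[of t] by (metis ennreal_mult)
  qed
  also have "\<dots> = ennreal (\<Sum>t\<in>targets gam u. rt u t / qq u * V t)"
    using q_pos[of u] rate_nonneg nn by (subst sum_ennreal) auto
  also have "(\<Sum>t\<in>targets gam u. rt u t / qq u * V t)
      = (\<Sum>t\<in>targets gam u. rt u t * (V t - V u)) / qq u + V u * (\<Sum>t\<in>targets gam u. rt u t) / qq u"
    by (simp add: sum_divide_distrib sum_distrib_left algebra_simps sum_subtractf diff_divide_distrib)
  also have "(\<Sum>t\<in>targets gam u. rt u t * (V t - V u)) = QV V u"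
    by (subst rate_sum) (auto simp: QV_def)
  also have "V u * (\<Sum>t\<in>targets gam u. rt u t) / qq u = V u"
    using q_pos[of u] by (simp add: qout_def)
  finally show ?thesis by (simp add: add.commute)
qed

lemma drift_enn:
  fixes V :: "state \<Rightarrow> real"
  assumes nn: "\<And>t. V t \<ge> 0" and dr: "QV V u \<le> - F + b" and F: "F \<ge> 0" and b: "b \<ge> 0"
  shows "ssum (\<lambda>t. PP u t * ennreal (V t)) + ennreal (F / qq u) \<le> ennreal (V u) + ennreal (b / qq u)"
proof -
  have qp: "qq u > 0" by (rule q_pos)
  have pv: "V u + QV V u / qq u \<ge> 0"
  proof -
    have "ssum (\<lambda>t. PP u t * ennreal (V t)) \<ge> 0" by simp
    have "V u * qq u + QV V u = (\<Sum>t\<in>targets gam u. rt u t * V t)"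
    proof -
      have "(\<Sum>t\<in>targets gam u. rt u t * V t) = (\<Sum>t\<in>targets gam u. rt u t * (V t - V u)) + V u * (\<Sum>t\<in>targets gam u. rt u t)"
        by (simp add: sum_distrib_left algebra_simps sum_subtractf)
      then show ?thesis by (subst (asm) rate_sum) (auto simp: QV_def qout_def)
    qed
    also have "\<dots> \<ge> 0" using nn rate_nonneg by (simp add: sum_nonneg)
    finally have "V u * qq u + QV V u \<ge> 0" .
    then have "(V u * qq u + QV V u) / qq u \<ge> 0" using qp by simp
    then show ?thesis using qp by (simp add: add_divide_distrib)
  qed
  have "V u + QV V u / qq u + F / qq u \<le> V u + b / qq u"
  proof -
    have "QV V u / qq u + F / qq u = (QV V u + F) / qq u" by (simp add: add_divide_distrib)
    also have "\<dots> \<le> b / qq u" using dr qp by (simp add: divide_right_mono)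
    finally show ?thesis by simp
  qed
  then have "ennreal (V u + QV V u / qq u + F / qq u) \<le> ennreal (V u + b / qq u)"
    by (rule ennreal_leI)
  then show ?thesis
    using pv F b nn[of u] qp
    by (simp add: PV_eq[OF nn] ennreal_plus[symmetric] del: ennreal_plus)
qed

end

lemma quad_bound:
  fixes \<alpha> K p :: real
  assumes "\<alpha> > 0"
  shows "- \<alpha> * p^2 + K * p \<le> K^2 / (4 * \<alpha>)"
proof -
  have "0 \<le> (2 * \<alpha> * p - K)^2" by simp
  then have "4 * \<alpha> * (K * p - \<alpha> * p^2) \<le> K^2"
    by (simp add: power2_eq_square algebra_simps)
  then have "K * p - \<alpha> * p^2 \<le> K^2 / (4 * \<alpha>)"
    using assms by (simp add: le_divide_eq mult.commute)
  then show ?thesis by simp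
qed

lemma corr_bound:
  fixes g x y c bet :: real
  assumes "x \<ge> 0" "g \<ge> 0" "c \<ge> 0" "bet \<ge> 0"
  shows "bet * x * (g - min g x) * (g * y + 2 * (x - c) - min g x) \<le> bet * g^2 * (g * \<bar>y\<bar> + g)"
proof (cases "g \<le> x")
  case True
  then have "min g x = g" by simp
  then show ?thesis using assms by simp
next
  case False
  then have m: "min g x = x" by simp
  have a0: "bet * x * (g - x) \<ge> 0" using assms False by simp
  have a1: "bet * x * (g - x) \<le> bet * g^2"
  proof -
    have "x * (g - x) \<le> g * g" using assms False by (intro mult_mono) auto
    then show ?thesis using assms by (simp add: power2_eq_square mult.assoc mult_left_mono)
  qed
  have z: "g * y + 2 * (x - c) - x \<le> g * \<bar>y\<bar> + g"
  proof -
    have h: "g * y \<le> g * \<bar>y\<bar>" using assms by (simp add: mult_left_mono)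
    show ?thesis using h assms False by (smt (verit))
  qed
  have b0: "bet * g^2 * (g * \<bar>y\<bar> + g) \<ge> 0" using assms by simp
  show ?thesis
  proof (cases "g * y + 2 * (x - c) - x \<le> 0")
    case True
    then have "bet * x * (g - x) * (g * y + 2 * (x - c) - x) \<le> 0"
      using a0 by (simp add: mult_nonneg_nonpos)
    then show ?thesis using m b0 by simp
  next
    case False
    have "bet * x * (g - x) * (g * y + 2 * (x - c) - x) \<le> bet * g^2 * (g * \<bar>y\<bar> + g)"
      by (rule mult_mono[OF a1 z]) (use b0 False assms in auto)
    then show ?thesis using m by simp
  qed
qed

definition Acst :: "real \<Rightarrow> real \<Rightarrow> nat \<Rightarrow> real" where
  "Acst bet eps gam = real gam ^ 2 / 2 + eps / bet"
definition K1cst :: "real \<Rightarrow> real \<Rightarrow> nat \<Rightarrow> real" where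
  "K1cst bet eps gam = 2 * eps + bet * real gam ^ 3"
definition K2cst :: "real \<Rightarrow> real \<Rightarrow> nat \<Rightarrow> real" where
  "K2cst bet eps gam = Acst bet eps gam * bet + eps"
definition Bcst :: "real \<Rightarrow> real \<Rightarrow> nat \<Rightarrow> real" where
  "Bcst bet eps gam = K1cst bet eps gam ^ 2 / (4 * real gam * eps) + K2cst bet eps gam ^ 2 / (4 * real gam * bet)
     + 3 * Acst bet eps gam * bet + bet * real gam ^ 3 + eps"

lemma generic_bound:
  fixes g bet eps A c y v p w :: real
  assumes g: "g \<ge> 1" and bet: "bet > 0" and eps: "eps > 0" and c: "c \<ge> 1"
    and A: "A = Acst bet eps gam" and gg: "g = real gam"
    and cb: "corr \<le> bet * g^2 * (g * \<bar>y\<bar> + g)"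
  shows "- g * bet * v^2 + A * bet * (2 * c + v) - g * eps * y^2 + eps * \<bar>y\<bar> + corr
          \<le> - (eps * c * (\<bar>y\<bar> + \<bar>v\<bar>)) + Bcst bet eps gam * c^2"
proof -
  define K1 where "K1 = K1cst bet eps gam"
  define K2 where "K2 = K2cst bet eps gam"
  have A0: "A > 0" unfolding A Acst_def using bet eps by (intro add_nonneg_pos) auto
  have g3: "g^3 \<ge> 0" using g by simp
  have q1: "- (g * eps) * \<bar>y\<bar>^2 + (K1 * c) * \<bar>y\<bar> \<le> (K1 * c)^2 / (4 * (g * eps))"
    by (rule quad_bound) (use g eps in simp)
  have q2: "- (g * bet) * \<bar>v\<bar>^2 + (K2 * c) * \<bar>v\<bar> \<le> (K2 * c)^2 / (4 * (g * bet))"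
    by (rule quad_bound) (use g bet in simp)
  have e1: "eps * \<bar>y\<bar> + bet * g^2 * (g * \<bar>y\<bar>) + eps * c * \<bar>y\<bar> \<le> (K1 * c) * \<bar>y\<bar>"
  proof -
    have "eps * \<bar>y\<bar> + bet * g^2 * (g * \<bar>y\<bar>) + eps * c * \<bar>y\<bar> = (eps + bet * g^3 + eps * c) * \<bar>y\<bar>"
      by (simp add: algebra_simps power3_eq_cube power2_eq_square)
    also have "\<dots> \<le> (K1 * c) * \<bar>y\<bar>"
    proof (rule mult_right_mono)
      have nn: "eps + bet * g^3 \<ge> 0" using eps bet g3 by simp
      have "eps + bet * g^3 \<le> (eps + bet * g^3) * c" using mult_left_mono[OF c nn] by simp
      then show "eps + bet * g^3 + eps * c \<le> K1 * c"
        by (simp add: K1_def K1cst_def gg algebra_simps)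
    qed simp
    finally show ?thesis .
  qed
  have e2: "A * bet * v + eps * c * \<bar>v\<bar> \<le> (K2 * c) * \<bar>v\<bar>"
  proof -
    have "A * bet * v \<le> A * bet * \<bar>v\<bar>" using A0 bet by (simp add: mult_left_mono)
    also have "A * bet * \<bar>v\<bar> \<le> A * bet * c * \<bar>v\<bar>"
    proof -
      have h: "\<bar>v\<bar> \<le> c * \<bar>v\<bar>" using mult_right_mono[OF c, of "\<bar>v\<bar>"] by simp
      have "A * bet * \<bar>v\<bar> \<le> A * bet * (c * \<bar>v\<bar>)" by (rule mult_left_mono[OF h]) (use A0 bet in simp)
      then show ?thesis by (simp add: mult.assoc)
    qed
    finally show ?thesis by (simp add: K2_def K2cst_def A algebra_simps)
  qed
  have e3: "A * bet * (2 * c) + bet * g^2 * g \<le> (2 * A * bet + bet * g^3) * c^2"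
  proof -
    have "c \<le> c^2" using c by (simp add: power2_eq_square)
    moreover have "1 \<le> c^2" using c by (simp add: one_le_power)
    ultimately have "2 * A * bet * c \<le> 2 * A * bet * c^2" "bet * g^3 * 1 \<le> bet * g^3 * c^2"
      using A0 bet g3 by (simp add: mult_left_mono, intro mult_left_mono) auto
    then show ?thesis by (simp add: algebra_simps power3_eq_cube power2_eq_square)
  qed
  have sq: "y^2 = \<bar>y\<bar>^2" "v^2 = \<bar>v\<bar>^2" by simp_all
  have B: "Bcst bet eps gam * c^2 = (K1 * c)^2 / (4 * (g * eps)) + (K2 * c)^2 / (4 * (g * bet))
            + (2 * A * bet + bet * g^3) * c^2 + (A * bet + eps) * c^2"
    by (simp add: Bcst_def K1_def K2_def A gg power_mult_distrib field_simps)
  have Bpos: "(A * bet + eps) * c^2 \<ge> 0" using A0 bet eps by simp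
  show ?thesis
    using q1 q2 e1 e2 e3 cb Bpos unfolding B sq
    by (simp add: algebra_simps)
qed

definition Vfun :: "real \<Rightarrow> real \<Rightarrow> real \<Rightarrow> nat \<Rightarrow> real \<Rightarrow> state \<Rightarrow> real" where
  "Vfun lam bet eps gam r u = Acst bet eps gam * (real_of_int (fst u))^2
     + real gam * real_of_int (fst u) * (real (snd u) - lam * r / bet) + (real (snd u) - lam * r / bet)^2"

definition Ffun :: "real \<Rightarrow> real \<Rightarrow> real \<Rightarrow> real \<Rightarrow> state \<Rightarrow> real" where
  "Ffun lam bet eps r u = eps * (lam * r / bet) * (\<bar>real_of_int (fst u)\<bar> + \<bar>real (snd u) - lam * r / bet\<bar>)"

lemma QV_ident:
  fixes bet A g eps x v c y m ay :: real
  assumes h1: "bet * (2 * A) = bet * g^2 + 2 * eps" and h2: "x = v + c"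
  shows "bet * c * (A - (2 * A - g^2) * y + g * v)
        + bet * x * ((2 * A - g * m) * y + (g - 2 * m) * v + A - g * m + m^2)
        + (- g * eps * y^2 - 2 * eps * y * v + eps * ay)
      = - g * bet * v^2 + A * bet * (2 * c + v) - g * eps * y^2 + eps * ay
                 + bet * x * (g - m) * (g * y + 2 * v - m)"
proof -
  have e: "eps = bet * A - bet * g^2 / 2" using h1 by simp
  show ?thesis unfolding h2 e
    by (simp add: algebra_simps power2_eq_square)
qed

context params
begin

definition "cc = lam * r / bet"

abbreviation "A \<equiv> Acst bet eps gam"
abbreviation "Vr \<equiv> Vfun lam bet eps gam r"

lemma Vr_cc: "Vr u = A * (real_of_int (fst u))^2 + real gam * real_of_int (fst u) * (real (snd u) - cc) + (real (snd u) - cc)^2"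
  by (simp add: Vfun_def cc_def)

lemma Ffun_cc: "Ffun lam bet eps r u = eps * cc * (\<bar>real_of_int (fst u)\<bar> + \<bar>real (snd u) - cc\<bar>)"
  by (simp add: Ffun_def cc_def)

lemma A_pos: "A > 0" unfolding Acst_def using bet eps by (intro add_nonneg_pos) auto

lemma betA: "bet * (2 * A) = bet * real gam^2 + 2 * eps"
  using bet by (simp add: Acst_def field_simps)

lemma lamr: "lam * r = bet * cc" using bet by (simp add: cc_def)

lemma c_nonneg: "cc \<ge> 0" using lam rpos bet by (simp add: cc_def)

lemma Vr_nonneg: "Vr u \<ge> 0"
proof -
  define y where "y = real_of_int (fst u)"
  define v where "v = real (snd u) - cc"
  define g where "g = real gam"
  have "Vr u = (v + g * y / 2)^2 + (A - g^2/4) * y^2"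
    by (simp add: Vr_cc y_def v_def g_def power2_eq_square algebra_simps)
  moreover have "A - g^2/4 \<ge> 0" using bet eps by (simp add: Acst_def g_def)
  ultimately show ?thesis by simp
qed

lemma d_arr: "Vr (arr_target gam u) - Vr u
   = A - (2 * A - real gam^2) * real_of_int (fst u) + real gam * (real (snd u) - cc)"
  by (simp add: Vr_cc arr_target_def power2_eq_square algebra_simps)

lemma d_srv: "Vr (srv_target gam u) - Vr u
   = (2 * A - real gam * min (real gam) (real (snd u))) * real_of_int (fst u)
     + (real gam - 2 * min (real gam) (real (snd u))) * (real (snd u) - cc)
     + A - real gam * min (real gam) (real (snd u)) + (min (real gam) (real (snd u)))^2"
proof -
  have "real (snd u - min gam (snd u)) = real (snd u) - min (real gam) (real (snd u))"
    by (simp add: of_nat_diff)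
  then show ?thesis
    by (simp add: Vr_cc srv_target_def power2_eq_square algebra_simps)
qed

lemma d_down: "snd u \<ge> 1 \<Longrightarrow> Vr (fst u, snd u - 1) - Vr u
   = - real gam * real_of_int (fst u) - 2 * (real (snd u) - cc) + 1"
  by (simp add: Vr_cc of_nat_diff power2_eq_square algebra_simps)

lemma d_up: "Vr (fst u, snd u + 1) - Vr u
   = real gam * real_of_int (fst u) + 2 * (real (snd u) - cc) + 1"
  by (simp add: Vr_cc power2_eq_square algebra_simps)

lemma eps_term:
  assumes "\<not> (snd u = 0 \<and> fst u \<ge> 0)"
  shows "eps * real_of_int \<bar>fst u\<bar> * (Vr (eps_target u) - Vr u)
     = - real gam * eps * (real_of_int (fst u))^2 - 2 * eps * real_of_int (fst u) * (real (snd u) - cc)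
       + eps * \<bar>real_of_int (fst u)\<bar>"
proof -
  obtain Y X where u: "u = (Y, X)" by (cases u)
  consider "Y > 0" | "Y = 0" | "Y < 0" by linarith
  then show ?thesis
  proof cases
    case 1
    then have X: "X \<ge> 1" using assms u by auto
    have et: "eps_target (Y, X) = (Y, X - 1)" using 1 X by (simp add: eps_target_def)
    have d: "Vr (Y, X - 1) - Vr (Y, X) = - real gam * real_of_int Y - 2 * (real X - cc) + 1"
      using d_down[of "(Y,X)"] X by simp
    show ?thesis using 1 unfolding u et d
      by (simp add: power2_eq_square algebra_simps)
  next
    case 2 then show ?thesis using u by simp
  next
    case 3
    have et: "eps_target (Y, X) = (Y, X + 1)" using 3
      by (cases "X \<ge> 1") (auto simp: eps_target_def)
    have d: "Vr (Y, X + 1) - Vr (Y, X) = real gam * real_of_int Y + 2 * (real X - cc) + 1"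
      using d_up[of "(Y,X)"] by simp
    show ?thesis using 3 unfolding u et d
      by (simp add: power2_eq_square algebra_simps)
  qed
qed

lemma QV_bound:
  assumes c1: "cc \<ge> 1"
  shows "QV Vr u \<le> - Ffun lam bet eps r u + Bcst bet eps gam * cc^2"
proof -
  obtain Y X where u: "u = (Y, X)" by (cases u)
  define y where "y = real_of_int Y"
  define x where "x = real X"
  define v where "v = x - cc"
  define g where "g = real gam"
  define m where "m = min g x"
  have g1: "g \<ge> 1" using gam by (simp add: g_def)
  have B0: "Bcst bet eps gam \<ge> A * bet + eps"
  proof -
    have "K1cst bet eps gam ^ 2 / (4 * real gam * eps) \<ge> 0" using eps by simp
    moreover have "K2cst bet eps gam ^ 2 / (4 * real gam * bet) \<ge> 0" using bet by simp
    moreover have "A * bet \<ge> 0" using A_pos bet by simp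
    moreover have "bet * real gam ^ 3 \<ge> 0" using bet by simp
    ultimately show ?thesis unfolding Bcst_def by linarith
  qed
  show ?thesis
  proof (cases "X = 0 \<and> Y \<ge> 0")
    case True
    then have et: "eps_target u = u" using u by (simp add: eps_target_def)
    have "QV Vr u = lam * r * (Vr (arr_target gam u) - Vr u)"
      using True u et by (simp add: QV_def)
    also have "\<dots> = bet * cc * (A - (2 * A - g^2) * y - g * cc)"
      using True u by (simp add: d_arr lamr y_def g_def)
    also have "\<dots> = A * bet * cc - 2 * eps * cc * y - g * bet * cc^2"
    proof -
      have hD: "bet * (2 * A - g^2) = 2 * eps" using betA by (simp add: g_def algebra_simps)
      have "bet * cc * (A - (2 * A - g^2) * y - g * cc) = A * bet * cc - (bet * (2 * A - g^2)) * cc * y - g * bet * cc^2"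
        by (simp add: algebra_simps power2_eq_square)
      then show ?thesis using hD by simp
    qed
    also have "\<dots> \<le> - (eps * cc * (y + cc)) + Bcst bet eps gam * cc^2"
    proof -
      have y0: "y \<ge> 0" using True by (simp add: y_def)
      have "cc \<le> cc^2" using c1 by (simp add: power2_eq_square)
      then have "A * bet * cc \<le> A * bet * cc^2" using A_pos bet by (simp add: mult_left_mono)
      moreover have "(A * bet + eps) * cc^2 \<le> Bcst bet eps gam * cc^2"
        using B0 by (simp add: mult_right_mono)
      moreover have "eps * cc * y \<ge> 0" using eps c1 y0 by simp
      moreover have "g * bet * cc^2 \<ge> 0" using g1 bet by simp
      ultimately show ?thesis by (simp add: algebra_simps power2_eq_square)
    qed
    also have "\<dots> = - Ffun lam bet eps r u + Bcst bet eps gam * cc^2"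
      using True u c_nonneg by (simp add: Ffun_cc y_def)
    finally show ?thesis .
  next
    case False
    have epst: "eps * real_of_int \<bar>fst u\<bar> * (Vr (eps_target u) - Vr u) = - g * eps * y^2 - 2 * eps * y * v + eps * \<bar>y\<bar>"
      using eps_term[of u] False u by (simp add: y_def v_def x_def g_def)
    have a: "Vr (arr_target gam u) - Vr u = A - (2 * A - g^2) * y + g * v"
      using u by (simp add: d_arr y_def v_def x_def g_def)
    have sv: "Vr (srv_target gam u) - Vr u = (2 * A - g * m) * y + (g - 2 * m) * v + A - g * m + m^2"
      using u by (simp add: d_srv y_def v_def x_def g_def m_def)
    have "QV Vr u = bet * cc * (A - (2 * A - g^2) * y + g * v)
        + bet * x * ((2 * A - g * m) * y + (g - 2 * m) * v + A - g * m + m^2)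
        + (- g * eps * y^2 - 2 * eps * y * v + eps * \<bar>y\<bar>)"
      unfolding QV_def a sv epst lamr using u by (simp add: x_def)
    also have "\<dots> = - g * bet * v^2 + A * bet * (2 * cc + v) - g * eps * y^2 + eps * \<bar>y\<bar>
                 + bet * x * (g - m) * (g * y + 2 * v - m)"
      by (rule QV_ident) (use betA in \<open>simp_all add: g_def v_def\<close>)
    also have "\<dots> \<le> - (eps * cc * (\<bar>y\<bar> + \<bar>v\<bar>)) + Bcst bet eps gam * cc^2"
    proof (rule generic_bound[OF g1 bet eps c1 refl g_def])
      show "bet * x * (g - m) * (g * y + 2 * v - m) \<le> bet * g^2 * (g * \<bar>y\<bar> + g)"
        unfolding m_def v_def by (rule corr_bound) (use bet c_nonneg g1 in \<open>auto simp: x_def\<close>)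
    qed
    also have "\<dots> = - Ffun lam bet eps r u + Bcst bet eps gam * cc^2"
      using u by (simp add: Ffun_cc y_def v_def x_def)
    finally show ?thesis .
  qed
qed

end

context params
begin

lemma rate_ge:
  assumes "t \<noteq> u"
  shows "rt u t \<ge> (if t = arr_target gam u then lam * r else 0)"
    and "rt u t \<ge> (if t = srv_target gam u then bet * real (snd u) else 0)"
    and "rt u t \<ge> (if t = eps_target u then eps * real_of_int \<bar>fst u\<bar> else 0)"
  using assms lam bet eps rpos by (auto simp: rate_def)

lemma E_arr: "E u (arr_target gam u)"
proof -
  have "rt u (arr_target gam u) \<ge> lam * r" using rate_ge(1)[of "arr_target gam u" u, OF arr_ne] by simp
  then show ?thesis using lam rpos by (intro P_pos) (smt (verit) mult_pos_pos)
qed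

lemma E_srv: "snd u \<ge> 1 \<Longrightarrow> E u (srv_target gam u)"
proof -
  assume X: "snd u \<ge> 1"
  have "rt u (srv_target gam u) \<ge> bet * real (snd u)" using rate_ge(2)[of "srv_target gam u" u, OF srv_ne] by simp
  moreover have "bet * real (snd u) > 0" using bet X by simp
  ultimately show ?thesis by (intro P_pos) simp
qed

lemma E_eps: "eps_target u \<noteq> u \<Longrightarrow> fst u \<noteq> 0 \<Longrightarrow> E u (eps_target u)"
proof -
  assume ne: "eps_target u \<noteq> u" and Y: "fst u \<noteq> 0"
  have "rt u (eps_target u) \<ge> eps * real_of_int \<bar>fst u\<bar>" using rate_ge(3)[OF ne] by simp
  moreover have "eps * real_of_int \<bar>fst u\<bar> > 0" using eps Y by simp
  ultimately show ?thesis by (intro P_pos) simp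
qed

abbreviation "star \<equiv> E\<^sup>*\<^sup>*"

lemma step_arr: "star (Y, X) (Y - 1, X + gam)"
  by (rule r_into_rtranclp) (use E_arr[of "(Y,X)"] in \<open>simp add: arr_target_def\<close>)

lemma step_srv: "X \<ge> 1 \<Longrightarrow> star (Y, X) (Y + 1, X - min gam X)"
  by (rule r_into_rtranclp) (use E_srv[of "(Y,X)"] in \<open>simp add: srv_target_def\<close>)

lemma step_up: "Y < 0 \<Longrightarrow> star (Y, X) (Y, X + 1)"
proof -
  assume Y: "Y < 0"
  have et: "eps_target (Y, X) = (Y, X + 1)" using Y
    by (cases "X \<ge> 1") (auto simp: eps_target_def)
  show ?thesis by (rule r_into_rtranclp) (use E_eps[of "(Y,X)"] Y et in auto)
qed

lemma step_down: "Y > 0 \<Longrightarrow> X \<ge> 1 \<Longrightarrow> star (Y, X) (Y, X - 1)"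
proof -
  assume Y: "Y > 0" and X: "X \<ge> 1"
  have et: "eps_target (Y, X) = (Y, X - 1)" using Y X by (simp add: eps_target_def)
  show ?thesis by (rule r_into_rtranclp) (use E_eps[of "(Y,X)"] Y X et in auto)
qed

lemma L_up: "Y < 0 \<Longrightarrow> star (Y, X) (Y, X + m)"
proof (induction m)
  case 0 then show ?case by simp
next
  case (Suc m)
  then show ?case using step_up[of Y "X + m"] by (simp add: rtranclp_trans)
qed

lemma L_down: "Y > 0 \<Longrightarrow> m \<le> X \<Longrightarrow> star (Y, X) (Y, X - m)"
proof (induction m)
  case 0 then show ?case by simp
next
  case (Suc m)
  then have "star (Y, X) (Y, X - m)" by simp
  moreover have "star (Y, X - m) (Y, X - m - 1)" using step_down[of Y "X - m"] Suc.prems by simp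
  ultimately show ?case by (simp add: rtranclp_trans)
qed

lemma L_inc: "star (0, j) (0, j + m)"
proof -
  have "star (0, j) (-1, j + gam)" using step_arr[of 0 j] by simp
  also have "star (-1, j + gam) (-1, j + gam + m)" by (rule L_up) simp
  also have "star (-1, j + gam + m) (0, j + m)"
    using step_srv[of "j + gam + m" "-1"] gam by simp
  finally show ?thesis .
qed

lemma L_dec: "j \<ge> gam \<Longrightarrow> m \<le> j - gam \<Longrightarrow> star (0, j) (0, j - m)"
proof -
  assume j: "j \<ge> gam" and m: "m \<le> j - gam"
  have "star (0, j) (1, j - gam)" using step_srv[of j 0] j gam by (simp add: min_def)
  also have "star (1, j - gam) (1, j - gam - m)" by (rule L_down) (use m in auto)
  also have "star (1, j - gam - m) (0, j - m)"
    using step_arr[of 1 "j - gam - m"] j m by simp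
  finally show ?thesis .
qed

lemma L_0: "j \<ge> gam \<Longrightarrow> k \<ge> gam \<Longrightarrow> star (0, j) (0, k)"
proof (cases "j \<le> k")
  case True
  then show ?thesis using L_inc[of j "k - j"] by simp
next
  case False
  assume "j \<ge> gam" "k \<ge> gam"
  then show ?thesis using L_dec[of j "j - k"] False by simp
qed

lemma L_pos: "star (int n, X) (0, X + gam * n)"
proof (induction n arbitrary: X)
  case 0 then show ?case by simp
next
  case (Suc n)
  have "star (int (Suc n), X) (int n, X + gam)" using step_arr[of "int (Suc n)" X] by simp
  also have "star (int n, X + gam) (0, X + gam + gam * n)" by (rule Suc.IH)
  finally show ?case by (simp add: algebra_simps)
qed

lemma L_neg: "\<exists>j\<ge>gam. star (- int n - 1, X) (0, j)"
proof (induction n arbitrary: X)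
  case 0
  have "star (-1, X) (-1, X + 2 * gam)" by (rule L_up) simp
  also have "star (-1, X + 2 * gam) (0, X + gam)"
    using step_srv[of "X + 2 * gam" "-1"] gam by (simp add: min_def add.commute)
  finally have "star (-1, X) (0, X + gam)" .
  then have "star (- int 0 - 1, X) (0, X + gam)" by simp
  then show ?case by (intro exI[of _ "X + gam"]) simp
next
  case (Suc n)
  let ?Y = "- int (Suc n) - 1"
  have "star (?Y, X) (?Y, X + 2 * gam)" by (rule L_up) simp
  also have "star (?Y, X + 2 * gam) (- int n - 1, X + gam)"
  proof -
    have "star (?Y, X + 2 * gam) (?Y + 1, X + 2 * gam - min gam (X + 2 * gam))"
      by (rule step_srv) (use gam in simp)
    moreover have "?Y + 1 = - int n - 1" "X + 2 * gam - min gam (X + 2 * gam) = X + gam" by auto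
    ultimately show ?thesis by metis
  qed
  finally show ?case using Suc.IH[of "X + gam"] by (auto intro: rtranclp_trans)
qed

lemma reach_all:
  assumes k: "k \<ge> gam"
  shows "star u (0, k)"
proof -
  obtain Y X where u: "u = (Y, X)" by (cases u)
  consider "Y > 0" | "Y < 0" | "Y = 0 \<and> X \<ge> gam" | "Y = 0 \<and> X < gam" by linarith
  then show ?thesis
  proof cases
    case 1
    then obtain n where n: "Y = int n" "n > 0" by (metis zero_less_imp_eq_int)
    have gn0: "gam \<le> gam * n" using n by simp
    have gn: "gam \<le> X + gam * n" using gn0 by linarith
    have "star (Y, X) (0, X + gam * n)" using L_pos n by simp
    also have "star (0, X + gam * n) (0, k)" by (rule L_0) (use n k gn in auto)
    finally show ?thesis using u by simp
  next
    case 2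
    define n where "n = nat (- Y - 1)"
    have Yn: "Y = - int n - 1" using 2 by (simp add: n_def)
    obtain j where j: "j \<ge> gam" "star (Y, X) (0, j)" using L_neg[of n X] Yn by auto
    show ?thesis using j L_0[OF j(1) k] u by (auto intro: rtranclp_trans)
  next
    case 3 then show ?thesis using L_0[of X k] k u by simp
  next
    case 4
    have "star (0, X) (-1, X + gam)" using step_arr[of 0 X] by simp
    moreover obtain j where j: "j \<ge> gam" "star (-1, X + gam) (0, j)" using L_neg[of 0 "X + gam"] by auto
    ultimately show ?thesis using L_0[OF j(1) k] u 4 by (auto intro: rtranclp_trans)
  qed
qed

end

lemma ssum_pmf: "ssum (\<lambda>x. ennreal (pmf p x)) = 1"
  unfolding ssum_def nn_integral_pmf by (simp add: measure_pmf.emeasure_space_1[simplified])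

locale stab = params +
  assumes c1: "cc \<ge> 1" and c2: "eps * cc \<ge> 2 * (bet + eps)"
begin

definition "k0 = nat \<lceil>cc\<rceil> + gam"
definition "s0 = (0::int, k0)"
abbreviation "B \<equiv> Bcst bet eps gam"
definition "bb = B * cc^2"
abbreviation "F \<equiv> Ffun lam bet eps r"
abbreviation "V \<equiv> \<lambda>u. ennreal (Vr u)"
abbreviation "nu0 \<equiv> nu s0"

lemma k0: "k0 \<ge> gam" by (simp add: k0_def)

lemma reach0: "star u s0"
  unfolding s0_def by (rule reach_all[OF k0])

lemma nu0_fin: "nu0 u < \<infinity>"
  by (rule path_fin[OF reach0])

lemma B_nonneg: "B \<ge> 0"
  unfolding Bcst_def using bet eps A_pos gam by (intro add_nonneg_nonneg) auto

lemma bb_nonneg: "bb \<ge> 0" using B_nonneg by (simp add: bb_def)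

lemma F_nonneg: "F u \<ge> 0" using eps c_nonneg by (simp add: Ffun_cc)

lemma lamr_pos: "lam * r > 0" using lam rpos by simp

lemma drift_main: "QV Vr u \<le> - F u + bb"
  using QV_bound[OF c1] by (simp add: bb_def)

definition "T = (bb + 2 * bet * cc) / (bet + eps)"
definition "Cset = {u::state. \<bar>real_of_int (fst u)\<bar> + \<bar>real (snd u) - cc\<bar> < T}"

lemma Cset_finite: "finite Cset"
proof -
  have "Cset \<subseteq> {- \<lceil>T\<rceil>..\<lceil>T\<rceil>} \<times> {0..nat \<lceil>cc + T\<rceil>}"
  proof
    fix u assume "u \<in> Cset"
    then have h: "\<bar>real_of_int (fst u)\<bar> + \<bar>real (snd u) - cc\<bar> < T" by (simp add: Cset_def)
    have y1: "real_of_int (fst u) \<le> T" using h by linarith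
    have y2: "real_of_int (- fst u) \<le> T" using h by linarith
    have "fst u \<le> \<lceil>T\<rceil>" using y1 by (simp add: le_ceiling_iff)
    moreover have "- fst u \<le> \<lceil>T\<rceil>" using y2 by (simp only: le_ceiling_iff)
    ultimately have a: "fst u \<in> {- \<lceil>T\<rceil>..\<lceil>T\<rceil>}" by simp
    have "real (snd u) \<le> cc + T" using h by linarith
    then have "int (snd u) \<le> \<lceil>cc + T\<rceil>" by (simp add: le_ceiling_iff)
    then have "snd u \<le> nat \<lceil>cc + T\<rceil>" by linarith
    with a show "u \<in> {- \<lceil>T\<rceil>..\<lceil>T\<rceil>} \<times> {0..nat \<lceil>cc + T\<rceil>}" by (cases u) auto
  qed
  then show ?thesis by (rule finite_subset) auto
qed

lemma offC: "u \<notin> Cset \<Longrightarrow> QV Vr u \<le> - qq u + 0"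
proof -
  assume nc: "u \<notin> Cset"
  define p where "p = \<bar>real_of_int (fst u)\<bar>"
  define w where "w = \<bar>real (snd u) - cc\<bar>"
  have pw: "p + w \<ge> T" using nc by (simp add: Cset_def p_def w_def)
  have p0: "p \<ge> 0" "w \<ge> 0" by (simp_all add: p_def w_def)
  have Tle: "(bet + eps) * (p + w) \<ge> bb + 2 * bet * cc"
    using pw bet eps by (simp add: T_def divide_le_eq mult.commute)
  have qle: "qq u \<le> 2 * bet * cc + bet * w + eps * p"
  proof -
    have "real (snd u) \<le> w + cc" by (simp add: w_def)
    then have "bet * real (snd u) \<le> bet * (w + cc)" using bet by simp
    then show ?thesis using q_le[of u] lamr by (simp add: p_def algebra_simps)
  qed
  have "eps * cc * (p + w) \<ge> 2 * (bet + eps) * (p + w)"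
    using c2 p0 by (intro mult_right_mono) auto
  moreover have Fu: "F u = eps * cc * (p + w)" by (simp add: Ffun_cc p_def w_def)
  moreover have "2 * (bet + eps) * (p + w) = 2 * (bet * p) + 2 * (eps * p) + 2 * (bet * w) + 2 * (eps * w)"
    by (simp add: algebra_simps)
  moreover have "(bet + eps) * (p + w) = bet * p + eps * p + bet * w + eps * w"
    by (simp add: algebra_simps)
  moreover have "bet * p \<ge> 0" "eps * w \<ge> 0" using p0 bet eps by simp_all
  ultimately have "F u \<ge> bb + qq u"
    using Tle qle by linarith
  then show ?thesis using drift_main[of u] by simp
qed

lemma foster: "ssum nu0 < \<infinity>"
proof -
  define H where "H = ennreal (1 + bb / (lam * r))"
  define h where "h u = (if u \<in> Cset then H else 0)" for u
  have dr: "ssum (\<lambda>t. PP u t * V t) + 1 \<le> V u + h u" for u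
  proof (cases "u \<in> Cset")
    case False
    have "ssum (\<lambda>t. PP u t * V t) + ennreal (qq u / qq u) \<le> V u + ennreal (0 / qq u)"
      by (rule drift_enn[OF Vr_nonneg offC[OF False]]) (use q_pos[of u] in auto)
    then show ?thesis using q_pos[of u] False by (simp add: h_def)
  next
    case True
    have "ssum (\<lambda>t. PP u t * V t) + ennreal (F u / qq u) \<le> V u + ennreal (bb / qq u)"
      by (rule drift_enn[OF Vr_nonneg drift_main F_nonneg bb_nonneg])
    moreover have "ssum (\<lambda>t. PP u t * V t) \<le> ssum (\<lambda>t. PP u t * V t) + ennreal (F u / qq u)"
      by (rule add_increasing2) auto
    ultimately have "ssum (\<lambda>t. PP u t * V t) \<le> V u + ennreal (bb / qq u)"
      by (rule order_trans[rotated])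
    also have "\<dots> \<le> V u + ennreal (bb / (lam * r))"
      using q_ge[of u] lamr_pos bb_nonneg by (intro add_left_mono ennreal_leI divide_left_mono) auto
    finally have "ssum (\<lambda>t. PP u t * V t) + 1 \<le> V u + ennreal (bb / (lam * r)) + 1"
      by (rule add_right_mono)
    also have "\<dots> = V u + h u"
    proof -
      have "ennreal (bb / (lam * r)) + 1 = H"
      proof -
        have "bb / (lam * r) \<ge> 0" using bb_nonneg lamr_pos by simp
        then show ?thesis by (simp add: H_def ennreal_plus add.commute)
      qed
      then show ?thesis using True by (simp add: h_def add.assoc)
    qed
    finally show ?thesis .
  qed
  have "ssum (\<lambda>u. nu0 u * 1) \<le> V s0 + ssum (\<lambda>u. nu0 u * h u)"
    by (rule comparison) (rule dr)
  also have "ssum (\<lambda>u. nu0 u * h u) = (\<Sum>u\<in>Cset. nu0 u * h u)"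
    by (rule ssum_finite[OF Cset_finite]) (simp add: h_def)
  also have "\<dots> = (\<Sum>u\<in>Cset. nu0 u * H)" by (simp add: h_def)
  also have "\<dots> < \<infinity>"
  proof -
    have "(\<Sum>u\<in>Cset. nu0 u * H) \<noteq> \<infinity>"
    proof -
      have "\<forall>u. nu0 u \<noteq> \<infinity>" using nu0_fin by (simp add: less_top)
      then show ?thesis using Cset_finite by (auto simp: H_def ennreal_mult_eq_top_iff)
    qed
    then show ?thesis by (simp add: less_top)
  qed
  finally show ?thesis by simp
qed

lemma rp0: "rp s0 = 1" by (rule rp_one[OF foster])

lemma nu0_inv: "ssum (\<lambda>u. nu0 u * PP u t) = nu0 t"
  using nu_inv[of s0 t] rp0 nu_self[of s0] by simp

lemma mrt_fin: "mrt s0 < \<infinity>"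
proof -
  have "mrt s0 \<le> ssum (\<lambda>u. nu0 u * ennreal (1 / (lam * r)))"
    unfolding mrt_eq
    by (rule ssum_mono, rule mult_left_mono, rule ennreal_leI)
       (use q_ge q_pos lamr_pos in \<open>auto intro!: divide_left_mono mult_pos_pos\<close>)
  also have "\<dots> = ssum nu0 * ennreal (1 / (lam * r))" by (simp add: ssum_cmult_right)
  also have "\<dots> < \<infinity>" using foster by (simp add: ennreal_mult_less_top)
  finally show ?thesis .
qed

lemma mrt_ge: "mrt s0 \<ge> ennreal (1 / qq s0)"
  using ssum_ge[of "\<lambda>u. nu0 u * ennreal (1 / qq u)" s0] by (simp add: mrt_eq nu_self)

definition "mm = enn2real (mrt s0)"

lemma mm: "mrt s0 = ennreal mm" "mm > 0" "mm \<ge> 1 / qq s0"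
proof -
  show e: "mrt s0 = ennreal mm" using mrt_fin by (simp add: mm_def less_top ennreal_enn2real_if)
  have "mm \<ge> 0" by (simp add: mm_def)
  then show "mm \<ge> 1 / qq s0" using mrt_ge unfolding e by (simp add: ennreal_le_iff)
  then show "mm > 0" using q_pos[of s0] by (smt (verit) divide_pos_pos)
qed

definition "nr u = enn2real (nu0 u)"

lemma nr: "nu0 u = ennreal (nr u)" "nr u \<ge> 0"
  using nu0_fin[of u] by (simp_all add: nr_def less_top ennreal_enn2real_if)

definition "f0 u = nr u / (qq u * mm)"

lemma f0_nonneg: "f0 u \<ge> 0" using nr mm q_pos[of u] by (simp add: f0_def)

lemma f0_enn: "ennreal (f0 u) = nu0 u * ennreal (1 / qq u) * ennreal (1 / mm)"
  using nr(2)[of u] q_pos[of u] mm(2) by (simp add: f0_def nr(1) ennreal_mult[symmetric] del: ennreal_mult)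

lemma f0_sum: "ssum (\<lambda>u. ennreal (f0 u)) = 1"
proof -
  have "ssum (\<lambda>u. ennreal (f0 u)) = mrt s0 * ennreal (1 / mm)"
    by (simp add: f0_enn mrt_eq ssum_cmult_right)
  also have "\<dots> = 1" using mm by (simp add: ennreal_mult[symmetric] del: ennreal_mult)
  finally show ?thesis .
qed

definition "pi0 = embed_pmf f0"

lemma pmf_pi0: "pmf pi0 u = f0 u"
  unfolding pi0_def by (rule pmf_embed_pmf) (use f0_nonneg f0_sum in \<open>auto simp: ssum_def\<close>)

lemma pi0_stationary: "stationary lam bet eps gam r pi0"
  unfolding stationary_def
proof
  fix t
  show "((\<lambda>u. pmf pi0 u * rt u t) has_sum (pmf pi0 t * qq t)) UNIV"
  proof (rule ssum_has_sum)
    have "ssum (\<lambda>u. ennreal (pmf pi0 u * rt u t)) = ssum (\<lambda>u. nu0 u * PP u t * ennreal (1 / mm))"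
    proof (rule ssum_cong)
      fix u
      have "pmf pi0 u * rt u t = nr u * (rt u t / qq u) * (1 / mm)"
        using q_pos[of u] by (simp add: pmf_pi0 f0_def)
      then show "ennreal (pmf pi0 u * rt u t) = nu0 u * PP u t * ennreal (1 / mm)"
        using nr(2)[of u] q_pos[of u] mm(2) rate_nonneg[of u t]
        by (simp add: nr(1) jump_def ennreal_mult[symmetric] del: ennreal_mult)
    qed
    also have "\<dots> = nu0 t * ennreal (1 / mm)" by (simp add: ssum_cmult_right nu0_inv)
    also have "\<dots> = ennreal (pmf pi0 t * qq t)"
      using nr(2)[of t] q_pos[of t] mm(2)
      by (simp add: nr(1) pmf_pi0 f0_def ennreal_mult[symmetric] del: ennreal_mult)
    finally show "ssum (\<lambda>u. ennreal (pmf pi0 u * rt u t)) = ennreal (pmf pi0 t * qq t)" .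
  qed (use rate_nonneg q_pos[of t] in \<open>auto simp: infinite_state\<close>)
qed

lemma unique: "stationary lam bet eps gam r \<pi> \<Longrightarrow> \<pi> = pi0"
proof -
  assume st: "stationary lam bet eps gam r \<pi>"
  define \<mu> where "\<mu> u = ennreal (pmf \<pi> u * qq u)" for u
  have inv: "ssum (\<lambda>u. \<mu> u * PP u t) = \<mu> t" for t
  proof -
    have "ssum (\<lambda>u. \<mu> u * PP u t) = ssum (\<lambda>u. ennreal (pmf \<pi> u * rt u t))"
    proof (rule ssum_cong)
      fix u
      have "pmf \<pi> u * rt u t = (pmf \<pi> u * qq u) * (rt u t / qq u)" using q_pos[of u] by simp
      then show "\<mu> u * PP u t = ennreal (pmf \<pi> u * rt u t)"
        using q_pos[of u] rate_nonneg[of u t]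
        by (simp add: \<mu>_def jump_def ennreal_mult[symmetric] del: ennreal_mult)
    qed
    also have "\<dots> = \<mu> t"
    proof -
      have hs: "((\<lambda>u. pmf \<pi> u * rt u t) has_sum (pmf \<pi> t * qq t)) UNIV"
        using st unfolding stationary_def by blast
      show ?thesis unfolding \<mu>_def
        by (rule has_sum_ssum[OF hs]) (use rate_nonneg infinite_state in auto)
    qed
    finally show ?thesis .
  qed
  have eq: "\<mu> t = \<mu> s0 * nu0 t" for t
    by (rule unique_inv[OF inv _ rp0 reach0]) (simp add: \<mu>_def)
  have pe: "ennreal (pmf \<pi> t) = \<mu> s0 * nu0 t * ennreal (1 / qq t)" for t
  proof -
    have "ennreal (pmf \<pi> t) = \<mu> t * ennreal (1 / qq t)"
      using q_pos[of t] by (simp add: \<mu>_def ennreal_mult[symmetric] del: ennreal_mult)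
    then show ?thesis using eq[of t] by simp
  qed
  have "1 = ssum (\<lambda>t. ennreal (pmf \<pi> t))" by (simp add: ssum_pmf)
  also have "\<dots> = \<mu> s0 * mrt s0" by (simp add: pe mrt_eq ssum_cmult mult.assoc)
  finally have m1: "\<mu> s0 * ennreal mm = 1" using mm(1) by simp
  have ms0: "\<mu> s0 = ennreal (1 / mm)"
  proof -
    have "\<mu> s0 = \<mu> s0 * ennreal mm * ennreal (1 / mm)"
      using mm(2) by (simp add: mult.assoc ennreal_mult[symmetric] del: ennreal_mult)
    then show ?thesis using m1 by simp
  qed
  show "\<pi> = pi0"
  proof (rule pmf_eqI)
    fix t
    have "ennreal (pmf \<pi> t) = ennreal (f0 t)"
      by (simp add: pe f0_enn ms0 mult.commute mult.left_commute)
    then show "pmf \<pi> t = pmf pi0 t" using f0_nonneg[of t] by (simp add: pmf_pi0)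
  qed
qed

lemma pi0_posrec: "s \<in> set_pmf pi0 \<Longrightarrow> pos_recurrent lam bet eps gam r s"
proof -
  assume s: "s \<in> set_pmf pi0"
  define \<mu> where "\<mu> u = nu0 u * ennreal (1 / mm)" for u
  show ?thesis
  proof (rule posrec_from_inv[of \<mu>])
    show "ssum (\<lambda>u. \<mu> u * PP u t) \<le> \<mu> t" for t
    proof -
      have "ssum (\<lambda>u. \<mu> u * PP u t) = ssum (\<lambda>u. nu0 u * PP u t * ennreal (1 / mm))"
        by (simp add: \<mu>_def mult.commute mult.left_commute)
      also have "\<dots> = \<mu> t" by (simp add: ssum_cmult_right nu0_inv \<mu>_def)
      finally show ?thesis by simp
    qed
    have "pmf pi0 s > 0" using s by (simp add: set_pmf_eq')
    then have "nr s > 0" using q_pos[of s] mm(2) nr(2)[of s] by (simp add: pmf_pi0 f0_def zero_less_divide_iff)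
    then show "0 < \<mu> s" using mm(2) by (simp add: \<mu>_def nr(1) ennreal_mult[symmetric] del: ennreal_mult)
    show "ssum \<mu> < \<infinity>"
    proof -
      have "ssum \<mu> = ssum (\<lambda>u. nu0 u * ennreal (1 / mm))" by (simp add: \<mu>_def[abs_def])
      also have "\<dots> = ssum nu0 * ennreal (1 / mm)" by (simp add: ssum_cmult_right)
      finally show ?thesis using foster by (simp add: ennreal_mult_less_top)
    qed
    have "ssum (\<lambda>u. \<mu> u * ennreal (1 / qq u)) = ssum (\<lambda>u. ennreal (f0 u))"
      by (simp add: \<mu>_def f0_enn mult.commute mult.left_commute)
    then show "ssum (\<lambda>u. \<mu> u * ennreal (1 / qq u)) < \<infinity>" by (simp add: f0_sum)
  qed
qed

end

definition K0cst :: "real \<Rightarrow> nat \<Rightarrow> real" where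
  "K0cst bet gam = (real gam + 1)^2 * bet * (3 + real gam)"

context stab
begin

lemma K0_nn: "K0cst bet gam \<ge> 0" using bet by (simp add: K0cst_def)

lemma s0_bounds: "Vr s0 \<le> (real gam + 1)^2" "qq s0 \<le> bet * (3 + real gam) * cc"
proof -
  have ce: "real (nat \<lceil>cc\<rceil>) = of_int \<lceil>cc\<rceil>" using c_nonneg by simp
  have k: "real k0 = of_int \<lceil>cc\<rceil> + real gam" by (simp add: k0_def ce)
  have a: "of_int \<lceil>cc\<rceil> \<ge> cc" "of_int \<lceil>cc\<rceil> < cc + 1" using ceiling_correct[of cc] by linarith+
  have v0: "real k0 - cc \<ge> 0" "real k0 - cc \<le> real gam + 1" using k a by linarith+
  have "Vr s0 = (real k0 - cc)^2" by (simp add: Vr_cc s0_def)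
  also have "\<dots> \<le> (real gam + 1)^2" using v0 by (intro power_mono) auto
  finally show "Vr s0 \<le> (real gam + 1)^2" .
  have "qq s0 \<le> lam * r + bet * real k0" using q_le[of s0] by (simp add: s0_def)
  also have "\<dots> \<le> bet * cc + bet * (cc + 1 + real gam)"
    using k a bet by (simp add: lamr) 
  also have "\<dots> \<le> bet * (3 + real gam) * cc"
  proof -
    have X0: "1 + real gam \<ge> 0" by simp
    have "1 + real gam \<le> (1 + real gam) * cc" using mult_left_mono[OF c1 X0] by simp
    then have "bet * (1 + real gam) \<le> bet * ((1 + real gam) * cc)" using bet by (intro mult_left_mono) auto
    then show ?thesis by (simp add: algebra_simps)
  qed
  finally show "qq s0 \<le> bet * (3 + real gam) * cc" .
qed

lemma Vq_bound: "Vr s0 * qq s0 \<le> K0cst bet gam * cc^2"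
proof -
  have "Vr s0 * qq s0 \<le> (real gam + 1)^2 * (bet * (3 + real gam) * cc)"
    using s0_bounds Vr_nonneg[of s0] q_pos[of s0] by (intro mult_mono) auto
  also have "\<dots> \<le> (real gam + 1)^2 * (bet * (3 + real gam) * cc) * cc"
  proof -
    have X0: "(real gam + 1)^2 * (bet * (3 + real gam) * cc) \<ge> 0" using bet c_nonneg by simp
    show ?thesis using mult_left_mono[OF c1 X0] by simp
  qed
  finally show ?thesis by (simp add: K0cst_def power2_eq_square algebra_simps)
qed

lemma moment: "ssum (\<lambda>u. ennreal (pmf pi0 u * F u)) \<le> ennreal (K0cst bet gam * cc^2 + bb)"
proof -
  define g where "g u = ennreal (F u / qq u)" for u
  have cmp: "ssum (\<lambda>u. nu0 u * g u) \<le> V s0 + ssum (\<lambda>u. nu0 u * ennreal (bb / qq u))"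
    unfolding g_def
    by (rule comparison) (rule drift_enn[OF Vr_nonneg drift_main F_nonneg bb_nonneg])
  have "ssum (\<lambda>u. nu0 u * ennreal (bb / qq u)) = ssum (\<lambda>u. nu0 u * ennreal (1 / qq u) * ennreal bb)"
  proof (rule ssum_cong)
    fix u
    have "ennreal (bb / qq u) = ennreal (1 / qq u) * ennreal bb"
      using bb_nonneg q_pos[of u] by (simp add: ennreal_mult[symmetric] del: ennreal_mult)
    then show "nu0 u * ennreal (bb / qq u) = nu0 u * ennreal (1 / qq u) * ennreal bb" by (simp add: mult.assoc)
  qed
  also have "\<dots> = ssum (\<lambda>u. nu0 u * ennreal (1 / qq u)) * ennreal bb" by (rule ssum_cmult_right)
  also have "\<dots> = ennreal (mm * bb)" using mm bb_nonneg by (simp add: mrt_eq[symmetric] ennreal_mult)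
  finally have cmp2: "ssum (\<lambda>u. nu0 u * g u) \<le> ennreal (Vr s0 + mm * bb)"
    using cmp Vr_nonneg[of s0] mm bb_nonneg by (simp add: ennreal_plus[symmetric] del: ennreal_plus)
  have "ssum (\<lambda>u. ennreal (pmf pi0 u * F u)) = ssum (\<lambda>u. nu0 u * g u) * ennreal (1 / mm)"
  proof -
    have "ennreal (pmf pi0 u * F u) = nu0 u * g u * ennreal (1 / mm)" for u
    proof -
      have "pmf pi0 u * F u = nr u * (F u / qq u) * (1 / mm)" by (simp add: pmf_pi0 f0_def)
      then show ?thesis
        using nr(2)[of u] F_nonneg[of u] q_pos[of u] mm(2)
        by (simp add: g_def nr(1) ennreal_mult[symmetric] del: ennreal_mult)
    qed
    then show ?thesis by (simp add: ssum_cmult_right)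
  qed
  also have "\<dots> \<le> ennreal (Vr s0 + mm * bb) * ennreal (1 / mm)" by (rule mult_right_mono[OF cmp2]) simp
  also have "\<dots> = ennreal ((Vr s0 + mm * bb) * (1 / mm))"
    by (rule ennreal_mult[symmetric]) (use mm(2) Vr_nonneg[of s0] bb_nonneg in auto)
  also have "\<dots> = ennreal (Vr s0 / mm + bb)"
    by (rule arg_cong[where f=ennreal]) (use mm(2) in \<open>simp add: field_simps\<close>)
  also have "\<dots> \<le> ennreal (K0cst bet gam * cc^2 + bb)"
  proof (rule ennreal_leI)
    have "1 / mm \<le> qq s0" using mm(2,3) q_pos[of s0] by (simp add: divide_le_eq mult.commute)
    then have "Vr s0 / mm \<le> Vr s0 * qq s0"
      using Vr_nonneg[of s0] by (simp add: divide_inverse mult_left_mono)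
    then show "Vr s0 / mm + bb \<le> K0cst bet gam * cc^2 + bb" using Vq_bound by simp
  qed
  finally show ?thesis .
qed

definition "Ev L = {s::state. \<bar>fst (scaled lam bet r s)\<bar> > L \<or> \<bar>snd (scaled lam bet r s)\<bar> > L}"

lemma tail:
  assumes L: "L > 0"
  shows "measure_pmf.prob pi0 (Ev L) \<le> (K0cst bet gam + B) * lam / (bet * eps * L)"
proof -
  define D where "D = eps * cc * L * r"
  have D: "D > 0" using eps c1 L rpos by (simp add: D_def)
  have ind: "indicator (Ev L) u \<le> ennreal (F u / D)" for u
  proof (cases "u \<in> Ev L")
    case True
    have "\<bar>real_of_int (fst u)\<bar> + \<bar>real (snd u) - cc\<bar> \<ge> L * r"
    proof -
      have "\<bar>real_of_int (fst u)\<bar> / r > L \<or> \<bar>real (snd u) - cc\<bar> / r > L"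
        using True rpos by (simp add: Ev_def scaled_def cc_def abs_divide)
      then have "\<bar>real_of_int (fst u)\<bar> > L * r \<or> \<bar>real (snd u) - cc\<bar> > L * r"
        using rpos by (auto simp: less_divide_eq)
      then show ?thesis by auto
    qed
    then have "F u \<ge> D"
      using eps c1 unfolding D_def Ffun_cc
      by (metis mult.assoc mult_le_cancel_left_pos mult_pos_pos order_less_le_trans zero_less_one)
    then have "F u / D \<ge> 1" using D by simp
    then show ?thesis using True by (simp add: ennreal_leI)
  qed (simp)
  have "emeasure (measure_pmf pi0) (Ev L) = ssum (\<lambda>u. ennreal (pmf pi0 u) * indicator (Ev L) u)"
    by (simp add: ssum_def nn_integral_measure_pmf[symmetric])
  also have "\<dots> \<le> ssum (\<lambda>u. ennreal (pmf pi0 u * F u) * ennreal (1 / D))"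
  proof (rule ssum_mono)
    fix u
    have "ennreal (pmf pi0 u) * indicator (Ev L) u \<le> ennreal (pmf pi0 u) * ennreal (F u / D)"
      by (rule mult_left_mono[OF ind]) simp
    also have "\<dots> = ennreal (pmf pi0 u * F u) * ennreal (1 / D)"
      using F_nonneg[of u] D by (simp add: ennreal_mult[symmetric] del: ennreal_mult)
    finally show "ennreal (pmf pi0 u) * indicator (Ev L) u \<le> ennreal (pmf pi0 u * F u) * ennreal (1 / D)" .
  qed
  also have "\<dots> = ssum (\<lambda>u. ennreal (pmf pi0 u * F u)) * ennreal (1 / D)"
    by (simp add: ssum_cmult_right)
  also have "\<dots> \<le> ennreal (K0cst bet gam * cc^2 + bb) * ennreal (1 / D)"
    by (rule mult_right_mono[OF moment]) simp
  also have "\<dots> = ennreal ((K0cst bet gam * cc^2 + bb) * (1 / D))"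
  proof -
    have "K0cst bet gam * cc^2 + bb \<ge> 0" using K0_nn bb_nonneg by simp
    then show ?thesis using D by (simp add: ennreal_mult[symmetric] del: ennreal_mult)
  qed
  also have "\<dots> = ennreal ((K0cst bet gam + B) * cc^2 / D)"
    by (rule arg_cong[where f=ennreal]) (use D in \<open>simp add: bb_def field_simps\<close>)
  finally have em: "emeasure (measure_pmf pi0) (Ev L) \<le> ennreal ((K0cst bet gam + B) * cc^2 / D)" .
  have "measure_pmf.prob pi0 (Ev L) \<le> (K0cst bet gam + B) * cc^2 / D"
    using em D B_nonneg K0_nn
    by (simp add: measure_pmf.emeasure_eq_measure ennreal_le_iff)
  also have "\<dots> = (K0cst bet gam + B) * lam / (bet * eps * L)"
    using D eps L rpos bet lam by (simp add: D_def cc_def power2_eq_square field_simps)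
  finally show ?thesis .
qed

end

theorem lemma4:
  fixes lam bet eps :: real and gam :: nat
  assumes "lam > 0" and "bet > 0" and "eps > 0" and "gam > 0"
    and "eps < real gam ^ 2 * bet / 4"
  shows "\<exists>R>0. (\<forall>r\<ge>R. (\<exists>!\<pi>. stationary lam bet eps gam r \<pi>)
                \<and> (\<forall>\<pi>. stationary lam bet eps gam r \<pi> \<longrightarrow>
                       (\<forall>s\<in>set_pmf \<pi>. pos_recurrent lam bet eps gam r s)))
           \<and> (\<forall>e>0. \<exists>M. \<forall>r\<ge>R. \<forall>\<pi>. stationary lam bet eps gam r \<pi> \<longrightarrow>
                 measure_pmf.prob \<pi> {s. \<bar>fst (scaled lam bet r s)\<bar> > M
                                       \<or> \<bar>snd (scaled lam bet r s)\<bar> > M} < e)"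
proof -
  note lam = assms(1) and bet = assms(2) and eps = assms(3) and gam = assms(4)
  define R where "R = bet / lam * (1 + 2 * (bet + eps) / eps)"
  define Kt where "Kt = (K0cst bet gam + Bcst bet eps gam) * lam / (bet * eps)"
  have Rpos: "R > 0"
  proof -
    have "1 + 2 * (bet + eps) / eps > 0" using bet eps by (simp add: add_pos_pos)
    then show ?thesis using lam bet unfolding R_def by simp
  qed
  have st: "stab lam bet eps gam r" if r: "r \<ge> R" for r
  proof -
    have rpos: "r > 0" using r Rpos by simp
    have "lam * r / bet \<ge> lam * R / bet" using r lam bet by (simp add: divide_right_mono)
    also have "lam * R / bet = 1 + 2 * (bet + eps) / eps" using lam bet by (simp add: R_def)
    finally have cc: "lam * r / bet \<ge> 1 + 2 * (bet + eps) / eps" .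
    have c1: "lam * r / bet \<ge> 1" using cc bet eps by (smt (verit) divide_nonneg_pos)
    have "eps * (lam * r / bet) \<ge> eps * (1 + 2 * (bet + eps) / eps)"
      using cc eps by (intro mult_left_mono) auto
    also have "eps * (1 + 2 * (bet + eps) / eps) = eps + 2 * (bet + eps)" using eps by (simp add: field_simps)
    finally have c2: "eps * (lam * r / bet) \<ge> 2 * (bet + eps)" using eps by linarith
    interpret P: params lam bet eps gam r by unfold_locales (use lam bet eps gam rpos in auto)
    show ?thesis
      unfolding stab_def stab_axioms_def
      using P.params_axioms c1 c2 by (simp add: P.cc_def)
  qed
  have Kt0: "Kt \<ge> 0"
  proof -
    interpret S: stab lam bet eps gam R by (rule st) simp
    show ?thesis using S.K0_nn S.B_nonneg lam bet eps by (simp add: Kt_def)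
  qed
  have part1: "(\<exists>!\<pi>. stationary lam bet eps gam r \<pi>)
                \<and> (\<forall>\<pi>. stationary lam bet eps gam r \<pi> \<longrightarrow>
                       (\<forall>s\<in>set_pmf \<pi>. pos_recurrent lam bet eps gam r s))" if r: "r \<ge> R" for r
  proof -
    interpret S: stab lam bet eps gam r by (rule st[OF r])
    have "\<exists>!\<pi>. stationary lam bet eps gam r \<pi>"
      using S.pi0_stationary S.unique by blast
    moreover have "\<forall>\<pi>. stationary lam bet eps gam r \<pi> \<longrightarrow>
                       (\<forall>s\<in>set_pmf \<pi>. pos_recurrent lam bet eps gam r s)"
      using S.unique S.pi0_posrec by blast
    ultimately show ?thesis by blast
  qed
  have part2: "\<exists>M. \<forall>r\<ge>R. \<forall>\<pi>. stationary lam bet eps gam r \<pi> \<longrightarrow>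
                 measure_pmf.prob \<pi> {s. \<bar>fst (scaled lam bet r s)\<bar> > M
                                       \<or> \<bar>snd (scaled lam bet r s)\<bar> > M} < e" if e: "e > 0" for e
  proof -
    define M where "M = 2 * Kt / e + 1"
    have M: "M > 0" using Kt0 e by (simp add: M_def add_nonneg_pos)
    have KM: "Kt / M < e"
    proof -
      have "e * M = 2 * Kt + e" using e by (simp add: M_def field_simps)
      then have "Kt < e * M" using e Kt0 by linarith
      then show ?thesis using M by (simp add: divide_less_eq mult.commute)
    qed
    have "measure_pmf.prob \<pi> {s. \<bar>fst (scaled lam bet r s)\<bar> > M \<or> \<bar>snd (scaled lam bet r s)\<bar> > M} < e"
      if r: "r \<ge> R" and stt: "stationary lam bet eps gam r \<pi>" for r \<pi>
    proof -
      interpret S: stab lam bet eps gam r by (rule st[OF r])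
      have "\<pi> = S.pi0" using stt by (rule S.unique)
      then have "measure_pmf.prob \<pi> {s. \<bar>fst (scaled lam bet r s)\<bar> > M \<or> \<bar>snd (scaled lam bet r s)\<bar> > M}
          = measure_pmf.prob S.pi0 (S.Ev M)" by (simp add: S.Ev_def)
      also have "\<dots> \<le> (K0cst bet gam + Bcst bet eps gam) * lam / (bet * eps * M)" by (rule S.tail[OF M])
      also have "\<dots> = Kt / M" by (simp add: Kt_def)
      finally show ?thesis using KM by simp
    qed
    then show ?thesis by blast
  qed
  show ?thesis using Rpos part1 part2 by blast
qed

end
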